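(* (i) Let $(H,\mathcal{R})$ be a quasitriangular Hopf algebra over a field $k$ with $H\neq k$. Then the functor ${}_H\mathcal{M}\to{}^H_H\mathcal{M}$ sending a left $H$-module $(V,\triangleright)$ to the crossed module $(V,\triangleright,\beta)$ with $\beta(v)=\mathcal{R}^{(2)}\otimes\mathcal{R}^{(1)}\triangleright v$, and acting as the identity on morphisms, is not an isomorphism of categories. (ii) Let $(H,\mathcal{R})$ be a dual quasitriangular Hopf algebra over $k$ with $H\neq k$. Then the functor ${}^H\mathcal{M}\to{}^H_H\mathcal{M}$ sending a left $H$-comodule $(V,\beta)$, $\beta(v)=v^{\bar{(1)}}\otimes v^{\bar{(2)}}$, to $(V,\beta,\triangleright)$ with $h\triangleright v=\mathcal{R}(v^{\bar{(1)}}\otimes h)v^{\bar{(2)}}$, and acting as the identity on morphisms, is not an isomorphism of categories.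
   Context: A quasitriangular Hopf algebra is a Hopf algebra $H$ with invertible $\mathcal{R}=\mathcal{R}^{(1)}\otimes\mathcal{R}^{(2)}\in H\otimes H$ (summation understood) with $(\Delta\otimes\mathrm{id})\mathcal{R}=\mathcal{R}_{13}\mathcal{R}_{23}$, $(\mathrm{id}\otimes\Delta)\mathcal{R}=\mathcal{R}_{13}\mathcal{R}_{12}$, $\Delta^{op}=\mathcal{R}(\Delta\,\cdot)\mathcal{R}^{-1}$. A dual quasitriangular Hopf algebra is a Hopf algebra with a convolution-invertible $\mathcal{R}:H\otimes H\to k$ satisfying $\mathcal{R}(hg\otimes f)=\mathcal{R}(h\otimes f_{(1)})\mathcal{R}(g\otimes f_{(2)})$, $\mathcal{R}(h\otimes gf)=\mathcal{R}(h_{(1)}\otimes f)\mathcal{R}(h_{(2)}\otimes g)$, $g_{(1)}h_{(1)}\mathcal{R}(h_{(2)}\otimes g_{(2)})=\mathcal{R}(h_{(1)}\otimes g_{(1)})h_{(2)}g_{(2)}$. ${}_H\mathcal{M}$ and ${}^H\mathcal{M}$ denote the categories of left $H$-modules and left $H$-comodules. ${}^H_H\mathcal{M}$ is the category of left crossed modules: vector spaces $V$ with a left $H$-action $\triangleright$ and a left $H$-coaction $v\mapsto v^{\bar{(1)}}\otimes v^{\bar{(2)}}\in H\otimes V$ satisfying $h_{(1)}v^{\bar{(1)}}\otimes h_{(2)}\triangleright v^{\bar{(2)}}=(h_{(1)}\triangleright v)^{\bar{(1)}}h_{(2)}\otimes(h_{(1)}\triangleright v)^{\bar{(2)}}$,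 with morphisms the linear maps intertwining both the action and the coaction. *)

theory Defs
  imports Main "HOL.Vector_Spaces"
begin

text \<open>An element of A \<otimes> B is represented by a finite list of pairs (a formal sum of
pure tensors).  Two representatives denote the same tensor iff they agree under
every f \<otimes> g with f, g linear functionals (over a field linear functionals separate
the points of a tensor product).\<close>

definition teq2 ::
  "('k::field \<Rightarrow> 'a::ab_group_add \<Rightarrow> 'a) \<Rightarrow> ('k \<Rightarrow> 'b::ab_group_add \<Rightarrow> 'b) \<Rightarrow>
   ('a \<times> 'b) list \<Rightarrow> ('a \<times> 'b) list \<Rightarrow> bool" where
  "teq2 sa sb xs ys \<longleftrightarrow>
     (\<forall>f g. Vector_Spaces.linear sa (*) f \<longrightarrow> Vector_Spaces.linear sb (*) g \<longrightarrow>
        sum_list (map (\<lambda>(a, b). f a * g b) xs) = sum_list (map (\<lambda>(a, b). f a * g b) ys))"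

definition teq3 ::
  "('k::field \<Rightarrow> 'a::ab_group_add \<Rightarrow> 'a) \<Rightarrow> ('k \<Rightarrow> 'b::ab_group_add \<Rightarrow> 'b) \<Rightarrow>
   ('k \<Rightarrow> 'c::ab_group_add \<Rightarrow> 'c) \<Rightarrow>
   ('a \<times> 'b \<times> 'c) list \<Rightarrow> ('a \<times> 'b \<times> 'c) list \<Rightarrow> bool" where
  "teq3 sa sb sc xs ys \<longleftrightarrow>
     (\<forall>f g h. Vector_Spaces.linear sa (*) f \<longrightarrow> Vector_Spaces.linear sb (*) g \<longrightarrow> Vector_Spaces.linear sc (*) h \<longrightarrow>
        sum_list (map (\<lambda>(a, b, c). f a * g b * h c) xs) =
        sum_list (map (\<lambda>(a, b, c). f a * g b * h c) ys))"

definition hopf_algebra ::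
  "('k::field \<Rightarrow> 'h::ab_group_add \<Rightarrow> 'h) \<Rightarrow> ('h \<Rightarrow> 'h \<Rightarrow> 'h) \<Rightarrow> 'h \<Rightarrow>
   ('h \<Rightarrow> ('h \<times> 'h) list) \<Rightarrow> ('h \<Rightarrow> 'k) \<Rightarrow> ('h \<Rightarrow> 'h) \<Rightarrow> bool" where
  "hopf_algebra sc mult one Delta eps S \<longleftrightarrow>
     vector_space sc
   \<comment> \<open>associative unital algebra\<close>
   \<and> (\<forall>a b c. mult (mult a b) c = mult a (mult b c))
   \<and> (\<forall>a. mult one a = a \<and> mult a one = a)
   \<and> (\<forall>a b c. mult (a + b) c = mult a c + mult b c \<and> mult a (b + c) = mult a b + mult a c)
   \<and> (\<forall>r a b. mult (sc r a) b = sc r (mult a b) \<and> mult a (sc r b) = sc r (mult a b))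
   \<comment> \<open>coassociative counital coalgebra\<close>
   \<and> (\<forall>a b. teq2 sc sc (Delta (a + b)) (Delta a @ Delta b))
   \<and> (\<forall>r a. teq2 sc sc (Delta (sc r a)) [(sc r x, y). (x, y) \<leftarrow> Delta a])
   \<and> (\<forall>h. teq3 sc sc sc [(x1, x2, y). (x, y) \<leftarrow> Delta h, (x1, x2) \<leftarrow> Delta x]
                         [(x, y1, y2). (x, y) \<leftarrow> Delta h, (y1, y2) \<leftarrow> Delta y])
   \<and> Vector_Spaces.linear sc (*) eps
   \<and> (\<forall>h. sum_list [sc (eps x) y. (x, y) \<leftarrow> Delta h] = h
        \<and> sum_list [sc (eps y) x. (x, y) \<leftarrow> Delta h] = h)
   \<comment> \<open>bialgebra\<close>
   \<and> (\<forall>a b. teq2 sc sc (Delta (mult a b))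
              [(mult a1 b1, mult a2 b2). (a1, a2) \<leftarrow> Delta a, (b1, b2) \<leftarrow> Delta b])
   \<and> teq2 sc sc (Delta one) [(one, one)]
   \<and> (\<forall>a b. eps (mult a b) = eps a * eps b)
   \<and> eps one = 1
   \<comment> \<open>antipode\<close>
   \<and> Vector_Spaces.linear sc sc S
   \<and> (\<forall>h. sum_list [mult (S x) y. (x, y) \<leftarrow> Delta h] = sc (eps h) one
        \<and> sum_list [mult x (S y). (x, y) \<leftarrow> Delta h] = sc (eps h) one)"

text \<open>H \<noteq> k: the unit map k \<rightarrow> H is not surjective.\<close>
definition hopf_nontrivial :: "('k::field \<Rightarrow> 'h::ab_group_add \<Rightarrow> 'h) \<Rightarrow> 'h \<Rightarrow> bool" where
  "hopf_nontrivial sc one \<longleftrightarrow> (\<exists>h. \<forall>c. h \<noteq> sc c one)"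

definition quasitriangular ::
  "('k::field \<Rightarrow> 'h::ab_group_add \<Rightarrow> 'h) \<Rightarrow> ('h \<Rightarrow> 'h \<Rightarrow> 'h) \<Rightarrow> 'h \<Rightarrow>
   ('h \<Rightarrow> ('h \<times> 'h) list) \<Rightarrow> ('h \<Rightarrow> 'k) \<Rightarrow> ('h \<Rightarrow> 'h) \<Rightarrow> ('h \<times> 'h) list \<Rightarrow> bool" where
  "quasitriangular sc mult one Delta eps S R \<longleftrightarrow>
     hopf_algebra sc mult one Delta eps S
   \<and> (\<exists>Rinv.
        teq2 sc sc [(mult a c, mult b d). (a, b) \<leftarrow> R, (c, d) \<leftarrow> Rinv] [(one, one)]
      \<and> teq2 sc sc [(mult c a, mult d b). (c, d) \<leftarrow> Rinv, (a, b) \<leftarrow> R] [(one, one)]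
      \<and> (\<forall>h. teq2 sc sc [(y, x). (x, y) \<leftarrow> Delta h]
               [(mult (mult a x) c, mult (mult b y) d).
                  (a, b) \<leftarrow> R, (x, y) \<leftarrow> Delta h, (c, d) \<leftarrow> Rinv]))
   \<and> teq3 sc sc sc [(x1, x2, y). (x, y) \<leftarrow> R, (x1, x2) \<leftarrow> Delta x]
                   [(a, c, mult b d). (a, b) \<leftarrow> R, (c, d) \<leftarrow> R]
   \<and> teq3 sc sc sc [(x, y1, y2). (x, y) \<leftarrow> R, (y1, y2) \<leftarrow> Delta y]
                   [(mult a c, d, b). (a, b) \<leftarrow> R, (c, d) \<leftarrow> R]"

definition dual_quasitriangular ::
  "('k::field \<Rightarrow> 'h::ab_group_add \<Rightarrow> 'h) \<Rightarrow> ('h \<Rightarrow> 'h \<Rightarrow> 'h) \<Rightarrow> 'h \<Rightarrow>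
   ('h \<Rightarrow> ('h \<times> 'h) list) \<Rightarrow> ('h \<Rightarrow> 'k) \<Rightarrow> ('h \<Rightarrow> 'h) \<Rightarrow> ('h \<Rightarrow> 'h \<Rightarrow> 'k) \<Rightarrow> bool" where
  "dual_quasitriangular sc mult one Delta eps S R \<longleftrightarrow>
     hopf_algebra sc mult one Delta eps S
   \<and> (\<forall>g. Vector_Spaces.linear sc (*) (\<lambda>h. R h g)) \<and> (\<forall>h. Vector_Spaces.linear sc (*) (R h))
   \<and> (\<exists>Rinv. (\<forall>g. Vector_Spaces.linear sc (*) (\<lambda>h. Rinv h g)) \<and> (\<forall>h. Vector_Spaces.linear sc (*) (Rinv h))
        \<and> (\<forall>h g. sum_list [R h1 g1 * Rinv h2 g2. (h1, h2) \<leftarrow> Delta h, (g1, g2) \<leftarrow> Delta g]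
                  = eps h * eps g
               \<and> sum_list [Rinv h1 g1 * R h2 g2. (h1, h2) \<leftarrow> Delta h, (g1, g2) \<leftarrow> Delta g]
                  = eps h * eps g))
   \<and> (\<forall>h g f. R (mult h g) f = sum_list [R h f1 * R g f2. (f1, f2) \<leftarrow> Delta f])
   \<and> (\<forall>h g f. R h (mult g f) = sum_list [R h1 f * R h2 g. (h1, h2) \<leftarrow> Delta h])
   \<and> (\<forall>h g. sum_list [sc (R h2 g2) (mult g1 h1). (g1, g2) \<leftarrow> Delta g, (h1, h2) \<leftarrow> Delta h]
          = sum_list [sc (R h1 g1) (mult h2 g2). (h1, h2) \<leftarrow> Delta h, (g1, g2) \<leftarrow> Delta g])"

definition left_module ::
  "('k::field \<Rightarrow> 'h::ab_group_add \<Rightarrow> 'h) \<Rightarrow> ('h \<Rightarrow> 'h \<Rightarrow> 'h) \<Rightarrow> 'h \<Rightarrow>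
   ('k \<Rightarrow> 'v::ab_group_add \<Rightarrow> 'v) \<Rightarrow> ('h \<Rightarrow> 'v \<Rightarrow> 'v) \<Rightarrow> bool" where
  "left_module sc mult one sv act \<longleftrightarrow>
     vector_space sv
   \<and> (\<forall>h v w. act h (v + w) = act h v + act h w)
   \<and> (\<forall>h g v. act (h + g) v = act h v + act g v)
   \<and> (\<forall>r h v. act (sc r h) v = sv r (act h v) \<and> act h (sv r v) = sv r (act h v))
   \<and> (\<forall>v. act one v = v)
   \<and> (\<forall>g h v. act (mult g h) v = act g (act h v))"

definition left_comodule ::
  "('k::field \<Rightarrow> 'h::ab_group_add \<Rightarrow> 'h) \<Rightarrow> ('h \<Rightarrow> ('h \<times> 'h) list) \<Rightarrow> ('h \<Rightarrow> 'k) \<Rightarrow>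
   ('k \<Rightarrow> 'v::ab_group_add \<Rightarrow> 'v) \<Rightarrow> ('v \<Rightarrow> ('h \<times> 'v) list) \<Rightarrow> bool" where
  "left_comodule sc Delta eps sv coact \<longleftrightarrow>
     vector_space sv
   \<and> (\<forall>v w. teq2 sc sv (coact (v + w)) (coact v @ coact w))
   \<and> (\<forall>r v. teq2 sc sv (coact (sv r v)) [(x, sv r w). (x, w) \<leftarrow> coact v])
   \<and> (\<forall>v. teq3 sc sc sv [(h1, h2, w). (h, w) \<leftarrow> coact v, (h1, h2) \<leftarrow> Delta h]
                         [(h, h', w'). (h, w) \<leftarrow> coact v, (h', w') \<leftarrow> coact w])
   \<and> (\<forall>v. sum_list [sv (eps h) w. (h, w) \<leftarrow> coact v] = v)"

definition crossed_module ::
  "('k::field \<Rightarrow> 'h::ab_group_add \<Rightarrow> 'h) \<Rightarrow> ('h \<Rightarrow> 'h \<Rightarrow> 'h) \<Rightarrow> 'h \<Rightarrow>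
   ('h \<Rightarrow> ('h \<times> 'h) list) \<Rightarrow> ('h \<Rightarrow> 'k) \<Rightarrow>
   ('k \<Rightarrow> 'v::ab_group_add \<Rightarrow> 'v) \<Rightarrow> ('h \<Rightarrow> 'v \<Rightarrow> 'v) \<Rightarrow> ('v \<Rightarrow> ('h \<times> 'v) list) \<Rightarrow> bool" where
  "crossed_module sc mult one Delta eps sv act coact \<longleftrightarrow>
     left_module sc mult one sv act
   \<and> left_comodule sc Delta eps sv coact
   \<and> (\<forall>h v. teq2 sc sv
        [(mult h1 x, act h2 y). (h1, h2) \<leftarrow> Delta h, (x, y) \<leftarrow> coact v]
        [(mult z h2, w). (h1, h2) \<leftarrow> Delta h, (z, w) \<leftarrow> coact (act h1 v)])"

definition module_hom ::
  "('k::field \<Rightarrow> 'v::ab_group_add \<Rightarrow> 'v) \<Rightarrow> ('h \<Rightarrow> 'v \<Rightarrow> 'v) \<Rightarrow> ('h \<Rightarrow> 'v \<Rightarrow> 'v) \<Rightarrow>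
   ('v \<Rightarrow> 'v) set" where
  "module_hom sv act act' = {f. Vector_Spaces.linear sv sv f \<and> (\<forall>h v. f (act h v) = act' h (f v))}"

definition comodule_hom ::
  "('k::field \<Rightarrow> 'h::ab_group_add \<Rightarrow> 'h) \<Rightarrow> ('k \<Rightarrow> 'v::ab_group_add \<Rightarrow> 'v) \<Rightarrow>
   ('v \<Rightarrow> ('h \<times> 'v) list) \<Rightarrow> ('v \<Rightarrow> ('h \<times> 'v) list) \<Rightarrow> ('v \<Rightarrow> 'v) set" where
  "comodule_hom sc sv coact coact' =
     {f. Vector_Spaces.linear sv sv f \<and> (\<forall>v. teq2 sc sv [(h, f w). (h, w) \<leftarrow> coact v] (coact' (f v)))}"

definition crossed_hom ::
  "('k::field \<Rightarrow> 'h::ab_group_add \<Rightarrow> 'h) \<Rightarrow> ('k \<Rightarrow> 'v::ab_group_add \<Rightarrow> 'v) \<Rightarrow>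
   ('h \<Rightarrow> 'v \<Rightarrow> 'v) \<times> ('v \<Rightarrow> ('h \<times> 'v) list) \<Rightarrow>
   ('h \<Rightarrow> 'v \<Rightarrow> 'v) \<times> ('v \<Rightarrow> ('h \<times> 'v) list) \<Rightarrow> ('v \<Rightarrow> 'v) set" where
  "crossed_hom sc sv X Y = module_hom sv (fst X) (fst Y) \<inter> comodule_hom sc sv (snd X) (snd Y)"

text \<open>Objects of the source (resp. target) category are given by a predicate ObA (ObB)
on representations, with eqA (eqB) saying when two representations denote the same
object; morphisms are maps V \<rightarrow> V given by HomA, HomB.  A functor F that is the identity
on morphisms is an isomorphism of categories iff it is bijective on objects and
on each hom-set.\<close>

definition id_on_morphisms_functor_iso ::
  "('a \<Rightarrow> bool) \<Rightarrow> ('a \<Rightarrow> 'a \<Rightarrow> bool) \<Rightarrow> ('a \<Rightarrow> 'a \<Rightarrow> ('v \<Rightarrow> 'v) set) \<Rightarrow>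
   ('b \<Rightarrow> bool) \<Rightarrow> ('b \<Rightarrow> 'b \<Rightarrow> bool) \<Rightarrow> ('b \<Rightarrow> 'b \<Rightarrow> ('v \<Rightarrow> 'v) set) \<Rightarrow>
   ('a \<Rightarrow> 'b) \<Rightarrow> bool" where
  "id_on_morphisms_functor_iso ObA eqA HomA ObB eqB HomB F \<longleftrightarrow>
     (\<forall>x y. ObA x \<longrightarrow> ObA y \<longrightarrow> eqB (F x) (F y) \<longrightarrow> eqA x y)
   \<and> (\<forall>z. ObB z \<longrightarrow> (\<exists>x. ObA x \<and> eqB (F x) z))
   \<and> (\<forall>x y. ObA x \<longrightarrow> ObA y \<longrightarrow> HomB (F x) (F y) = HomA x y)"

definition R_coaction :: "('h \<times> 'h) list \<Rightarrow> ('h \<Rightarrow> 'v \<Rightarrow> 'v) \<Rightarrow> 'v \<Rightarrow> ('h \<times> 'v) list" where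
  "R_coaction R act v = [(b, act a v). (a, b) \<leftarrow> R]"

definition R_action ::
  "('k \<Rightarrow> 'v::ab_group_add \<Rightarrow> 'v) \<Rightarrow> ('h \<Rightarrow> 'h \<Rightarrow> 'k) \<Rightarrow> ('v \<Rightarrow> ('h \<times> 'v) list) \<Rightarrow> 'h \<Rightarrow> 'v \<Rightarrow> 'v" where
  "R_action sv R coact h v = sum_list [sv (R x h) w. (x, w) \<leftarrow> coact v]"

definition crossed_obj_eq ::
  "('k::field \<Rightarrow> 'h::ab_group_add \<Rightarrow> 'h) \<Rightarrow> ('k \<Rightarrow> 'v::ab_group_add \<Rightarrow> 'v) \<Rightarrow>
   ('h \<Rightarrow> 'v \<Rightarrow> 'v) \<times> ('v \<Rightarrow> ('h \<times> 'v) list) \<Rightarrow>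
   ('h \<Rightarrow> 'v \<Rightarrow> 'v) \<times> ('v \<Rightarrow> ('h \<times> 'v) list) \<Rightarrow> bool" where
  "crossed_obj_eq sc sv X Y \<longleftrightarrow> fst X = fst Y \<and> (\<forall>v. teq2 sc sv (snd X v) (snd Y v))"

definition coact_eq ::
  "('k::field \<Rightarrow> 'h::ab_group_add \<Rightarrow> 'h) \<Rightarrow> ('k \<Rightarrow> 'v::ab_group_add \<Rightarrow> 'v) \<Rightarrow>
   ('v \<Rightarrow> ('h \<times> 'v) list) \<Rightarrow> ('v \<Rightarrow> ('h \<times> 'v) list) \<Rightarrow> bool" where
  "coact_eq sc sv c d \<longleftrightarrow> (\<forall>v. teq2 sc sv (c v) (d v))"

text \<open>Functor (i) restricted to objects with underlying vector space V.\<close>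
definition functor_i_iso ::
  "('k::field \<Rightarrow> 'h::ab_group_add \<Rightarrow> 'h) \<Rightarrow> ('h \<Rightarrow> 'h \<Rightarrow> 'h) \<Rightarrow> 'h \<Rightarrow>
   ('h \<Rightarrow> ('h \<times> 'h) list) \<Rightarrow> ('h \<Rightarrow> 'k) \<Rightarrow> ('h \<times> 'h) list \<Rightarrow>
   ('k \<Rightarrow> 'v::ab_group_add \<Rightarrow> 'v) \<Rightarrow> bool" where
  "functor_i_iso sc mult one Delta eps R sv \<longleftrightarrow>
     id_on_morphisms_functor_iso
       (left_module sc mult one sv) (=) (module_hom sv)
       (\<lambda>X. crossed_module sc mult one Delta eps sv (fst X) (snd X)) (crossed_obj_eq sc sv)
       (crossed_hom sc sv)
       (\<lambda>act. (act, R_coaction R act))"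

text \<open>Functor (ii) restricted to objects with underlying vector space V.\<close>
definition functor_ii_iso ::
  "('k::field \<Rightarrow> 'h::ab_group_add \<Rightarrow> 'h) \<Rightarrow> ('h \<Rightarrow> 'h \<Rightarrow> 'h) \<Rightarrow> 'h \<Rightarrow>
   ('h \<Rightarrow> ('h \<times> 'h) list) \<Rightarrow> ('h \<Rightarrow> 'k) \<Rightarrow> ('h \<Rightarrow> 'h \<Rightarrow> 'k) \<Rightarrow>
   ('k \<Rightarrow> 'v::ab_group_add \<Rightarrow> 'v) \<Rightarrow> bool" where
  "functor_ii_iso sc mult one Delta eps R sv \<longleftrightarrow>
     id_on_morphisms_functor_iso
       (left_comodule sc Delta eps sv) (coact_eq sc sv) (comodule_hom sc sv)
       (\<lambda>X. crossed_module sc mult one Delta eps sv (fst X) (snd X)) (crossed_obj_eq sc sv)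
       (crossed_hom sc sv)
       (\<lambda>coact. (R_action sv R coact, coact))"

end

theory Submission
  imports Defs
begin

lemma vs_field: "vector_space ((*) :: 'k::field \<Rightarrow> 'k \<Rightarrow> 'k)"
  by unfold_locales (simp_all add: algebra_simps)

lemma linI:
  "vector_space s1 \<Longrightarrow> vector_space s2 \<Longrightarrow> (\<And>x y. f (x + y) = f x + f y) \<Longrightarrow>
   (\<And>c x. f (s1 c x) = s2 c (f x)) \<Longrightarrow> Vector_Spaces.linear s1 s2 f"
  by (simp add: linear_iff)

lemma lin_add: "Vector_Spaces.linear s1 s2 f \<Longrightarrow> f (x + y) = f x + f y"
  by (simp add: linear_iff)
lemma lin_scale: "Vector_Spaces.linear s1 s2 f \<Longrightarrow> f (s1 c x) = s2 c (f x)"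
  by (simp add: linear_iff)
lemma lin_vs1: "Vector_Spaces.linear s1 s2 f \<Longrightarrow> vector_space s1"
  by (simp add: linear_iff)
lemma lin_vs2: "Vector_Spaces.linear s1 s2 f \<Longrightarrow> vector_space s2"
  by (simp add: linear_iff)
lemma lin_zero: "Vector_Spaces.linear s1 s2 f \<Longrightarrow> f 0 = 0"
  using lin_add[of s1 s2 f 0 0] by simp
lemma lin_neg: "Vector_Spaces.linear s1 s2 f \<Longrightarrow> f (- x) = - f x"
  using lin_add[of s1 s2 f x "-x"] lin_zero[of s1 s2 f] by (simp add: eq_neg_iff_add_eq_0 add.commute)
lemma lin_diff: "Vector_Spaces.linear s1 s2 f \<Longrightarrow> f (x - y) = f x - f y"
  using lin_add[of s1 s2 f x "-y"] lin_neg[of s1 s2 f y] by simp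
lemma lin_sum_list: "Vector_Spaces.linear s1 s2 f \<Longrightarrow> f (sum_list (map g xs)) = sum_list (map (\<lambda>x. f (g x)) xs)"
  by (induction xs) (simp_all add: lin_zero lin_add)
lemma lin_sum: "Vector_Spaces.linear s1 s2 f \<Longrightarrow> f (sum g A) = sum (\<lambda>x. f (g x)) A"
  by (induction A rule: infinite_finite_induct) (simp_all add: lin_zero lin_add)

lemma sum_list_sum_swap:
  "sum_list (map (\<lambda>x. \<Sum>e\<in>E. g e x) xs) = (\<Sum>e\<in>E. sum_list (map (g e) xs))"
  by (induction xs) (simp_all add: sum.distrib)

lemma sep:
  assumes vs: "vector_space s" and h: "\<And>\<phi>. Vector_Spaces.linear s (*) \<phi> \<Longrightarrow> \<phi> x = \<phi> y"
  shows "x = y"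
proof -
  interpret vector_space s by fact
  define B where "B = extend_basis {}"
  have ind: "independent B" and sp: "span B = UNIV"
    using independent_extend_basis[of "{}"] span_extend_basis[of "{}"] by (auto simp: B_def independent_empty)
  have "representation B x = representation B y"
  proof
    fix b show "representation B x b = representation B y b"
      using h[OF linear_representation[OF ind sp]] by simp
  qed
  note eq = this
  have "x = (\<Sum>b | representation B x b \<noteq> 0. s (representation B x b) b)"
    by (rule sum_nonzero_representation_eq[OF ind, symmetric]) (simp add: sp)
  also have "\<dots> = (\<Sum>b | representation B y b \<noteq> 0. s (representation B y b) b)"
    by (simp only: eq)
  also have "\<dots> = y"
    by (rule sum_nonzero_representation_eq[OF ind]) (simp add: sp)
  finally show ?thesis .
qed

lemma basis_expand:
  fixes s :: "'k::field \<Rightarrow> 'a::ab_group_add \<Rightarrow> 'a"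
  assumes vs: "vector_space s"
  obtains c :: "'a \<Rightarrow> 'a \<Rightarrow> 'k" where "\<And>e. Vector_Spaces.linear s (*) (c e)"
    "\<And>A. finite A \<Longrightarrow> \<exists>E. finite E \<and> (\<forall>x\<in>A. x = (\<Sum>e\<in>E. s (c e x) e))"
proof -
  interpret vector_space s by fact
  define B where "B = extend_basis {}"
  have ind: "independent B" and sp: "span B = UNIV"
    using independent_extend_basis[of "{}"] span_extend_basis[of "{}"] by (auto simp: B_def independent_empty)
  define c where "c e x = representation B x e" for e x
  have lc: "Vector_Spaces.linear s (*) (c e)" for e
    unfolding c_def using linear_representation[OF ind sp] .
  have ex: "\<exists>E. finite E \<and> (\<forall>x\<in>A. x = (\<Sum>e\<in>E. s (c e x) e))" if fA: "finite A" for A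
  proof (intro exI conjI ballI)
    let ?E = "\<Union>x\<in>A. {b. representation B x b \<noteq> 0}"
    show "finite ?E" using fA finite_representation by auto
    fix x assume xA: "x \<in> A"
    have "(\<Sum>e\<in>?E. s (c e x) e) = (\<Sum>b | representation B x b \<noteq> 0. s (representation B x b) b)"
      unfolding c_def
    proof (rule sum.mono_neutral_right)
      show "finite ?E" using fA finite_representation by auto
      show "{b. representation B x b \<noteq> 0} \<subseteq> ?E" using xA by blast
      show "\<forall>i\<in>?E - {b. representation B x b \<noteq> 0}. s (representation B x i) i = 0" by simp
    qed
    also have "\<dots> = x" by (rule sum_nonzero_representation_eq[OF ind]) (simp add: sp)
    finally show "x = (\<Sum>e\<in>?E. s (c e x) e)" by simp
  qed
  show ?thesis using that lc ex by blast
qed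

lemma teq2_bil:
  fixes F :: "'a::ab_group_add \<Rightarrow> 'b::ab_group_add \<Rightarrow> 'k::field"
  assumes vsa: "vector_space sa" and vsb: "vector_space sb" and t: "teq2 sa sb xs ys"
    and F1: "\<And>b. Vector_Spaces.linear sa (*) (\<lambda>a. F a b)" and F2: "\<And>a. Vector_Spaces.linear sb (*) (F a)"
  shows "sum_list (map (\<lambda>(a,b). F a b) xs) = sum_list (map (\<lambda>(a,b). F a b) ys)"
proof -
  obtain c where lc: "\<And>e. Vector_Spaces.linear sa (*) (c e)"
    and ex: "\<And>A. finite A \<Longrightarrow> \<exists>E. finite E \<and> (\<forall>x\<in>A. x = (\<Sum>e\<in>E. sa (c e x) e))"
    using basis_expand[OF vsa] by blast
  obtain E where fE: "finite E" and E: "\<forall>x\<in>set (map fst (xs @ ys)). x = (\<Sum>e\<in>E. sa (c e x) e)"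
    using ex[of "set (map fst (xs @ ys))"] by blast
  have key: "F a b = (\<Sum>e\<in>E. c e a * F e b)" if "a \<in> set (map fst (xs @ ys))" for a b
  proof -
    have "F a b = F (\<Sum>e\<in>E. sa (c e a) e) b" using E that by metis
    also have "\<dots> = (\<Sum>e\<in>E. c e a * F e b)"
      using lin_sum[OF F1[of b], of "\<lambda>e. sa (c e a) e" E] lin_scale[OF F1[of b]] by simp
    finally show ?thesis .
  qed
  have "sum_list (map (\<lambda>(a,b). F a b) xs) = sum_list (map (\<lambda>(a,b). \<Sum>e\<in>E. c e a * F e b) xs)"
    by (rule arg_cong[where f=sum_list], rule map_cong, rule refl, clarify, rule key, force)
  also have "\<dots> = (\<Sum>e\<in>E. sum_list (map (\<lambda>(a,b). c e a * F e b) xs))"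
    using sum_list_sum_swap[of "\<lambda>e (a,b). c e a * F e b" E xs] by (simp add: split_def)
  also have "\<dots> = (\<Sum>e\<in>E. sum_list (map (\<lambda>(a,b). c e a * F e b) ys))"
    using t lc F2 unfolding teq2_def by (intro sum.cong) auto
  also have "\<dots> = sum_list (map (\<lambda>(a,b). \<Sum>e\<in>E. c e a * F e b) ys)"
    using sum_list_sum_swap[of "\<lambda>e (a,b). c e a * F e b" E ys] by (simp add: split_def)
  also have "\<dots> = sum_list (map (\<lambda>(a,b). F a b) ys)"
    by (rule arg_cong[where f=sum_list], rule map_cong, rule refl, clarify, rule key[symmetric], force)
  finally show ?thesis .
qed


lemma teq3_tril:
  fixes F :: "'a::ab_group_add \<Rightarrow> 'b::ab_group_add \<Rightarrow> 'c::ab_group_add \<Rightarrow> 'k::field"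
  assumes vsa: "vector_space sa" and vsb: "vector_space sb" and t: "teq3 sa sb sc xs ys"
    and F1: "\<And>b c. Vector_Spaces.linear sa (*) (\<lambda>a. F a b c)"
    and F2: "\<And>a c. Vector_Spaces.linear sb (*) (\<lambda>b. F a b c)"
    and F3: "\<And>a b. Vector_Spaces.linear sc (*) (F a b)"
  shows "sum_list (map (\<lambda>(a,b,c). F a b c) xs) = sum_list (map (\<lambda>(a,b,c). F a b c) ys)"
proof -
  obtain c where lc: "\<And>e. Vector_Spaces.linear sa (*) (c e)"
    and ex: "\<And>A. finite A \<Longrightarrow> \<exists>E. finite E \<and> (\<forall>x\<in>A. x = (\<Sum>e\<in>E. sa (c e x) e))"
    using basis_expand[OF vsa] by blast
  obtain d where ld: "\<And>e. Vector_Spaces.linear sb (*) (d e)"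
    and ex2: "\<And>A. finite A \<Longrightarrow> \<exists>E. finite E \<and> (\<forall>x\<in>A. x = (\<Sum>e\<in>E. sb (d e x) e))"
    using basis_expand[OF vsb] by blast
  obtain E where fE: "finite E" and E: "\<forall>x\<in>set (map fst (xs @ ys)). x = (\<Sum>e\<in>E. sa (c e x) e)"
    using ex[of "set (map fst (xs @ ys))"] by blast
  obtain E2 where fE2: "finite E2" and E2: "\<forall>x\<in>set (map (fst \<circ> snd) (xs @ ys)). x = (\<Sum>e\<in>E2. sb (d e x) e)"
    using ex2[of "set (map (fst \<circ> snd) (xs @ ys))"] by blast
  have key: "F a b z = (\<Sum>e\<in>E. \<Sum>e2\<in>E2. c e a * d e2 b * F e e2 z)"
    if "a \<in> set (map fst (xs @ ys))" "b \<in> set (map (fst \<circ> snd) (xs @ ys))" for a b z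
  proof -
    have "F a b z = F (\<Sum>e\<in>E. sa (c e a) e) b z" using E that by metis
    also have "\<dots> = (\<Sum>e\<in>E. c e a * F e b z)"
      using lin_sum[OF F1[of b z], of "\<lambda>e. sa (c e a) e" E] lin_scale[OF F1[of b z]] by simp
    also have "\<dots> = (\<Sum>e\<in>E. c e a * F e (\<Sum>e2\<in>E2. sb (d e2 b) e2) z)" using E2 that by metis
    also have "\<dots> = (\<Sum>e\<in>E. \<Sum>e2\<in>E2. c e a * d e2 b * F e e2 z)"
    proof (rule sum.cong[OF refl])
      fix e
      have "F e (\<Sum>e2\<in>E2. sb (d e2 b) e2) z = (\<Sum>e2\<in>E2. d e2 b * F e e2 z)"
        using lin_sum[OF F2[of e z], of "\<lambda>e2. sb (d e2 b) e2" E2] lin_scale[OF F2[of e z]] by simp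
      then show "c e a * F e (\<Sum>e2\<in>E2. sb (d e2 b) e2) z = (\<Sum>e2\<in>E2. c e a * d e2 b * F e e2 z)"
        by (simp add: sum_distrib_left mult.assoc)
    qed
    finally show ?thesis .
  qed
  have "sum_list (map (\<lambda>(a,b,z). F a b z) xs) = sum_list (map (\<lambda>(a,b,z). \<Sum>e\<in>E. \<Sum>e2\<in>E2. c e a * d e2 b * F e e2 z) xs)"
    by (rule arg_cong[where f=sum_list], rule map_cong, rule refl, clarify, rule key, force, force)
  also have "\<dots> = (\<Sum>e\<in>E. \<Sum>e2\<in>E2. sum_list (map (\<lambda>(a,b,z). c e a * d e2 b * F e e2 z) xs))"
    using sum_list_sum_swap[of "\<lambda>e (a,b,z). \<Sum>e2\<in>E2. c e a * d e2 b * F e e2 z" E xs]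
      sum_list_sum_swap[of "\<lambda>e2 (a,b,z). c _ a * d e2 b * F _ e2 z" E2 xs]
    by (simp add: split_def)
  also have "\<dots> = (\<Sum>e\<in>E. \<Sum>e2\<in>E2. sum_list (map (\<lambda>(a,b,z). c e a * d e2 b * F e e2 z) ys))"
    using t lc ld F3 unfolding teq3_def by (intro sum.cong) auto
  also have "\<dots> = sum_list (map (\<lambda>(a,b,z). \<Sum>e\<in>E. \<Sum>e2\<in>E2. c e a * d e2 b * F e e2 z) ys)"
    using sum_list_sum_swap[of "\<lambda>e (a,b,z). \<Sum>e2\<in>E2. c e a * d e2 b * F e e2 z" E ys]
      sum_list_sum_swap[of "\<lambda>e2 (a,b,z). c _ a * d e2 b * F _ e2 z" E2 ys]
    by (simp add: split_def)
  also have "\<dots> = sum_list (map (\<lambda>(a,b,z). F a b z) ys)"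
    by (rule arg_cong[where f=sum_list], rule map_cong, rule refl, clarify, rule key[symmetric], force, force)
  finally show ?thesis .
qed

locale hopf =
  fixes sc :: "'k::field \<Rightarrow> 'h::ab_group_add \<Rightarrow> 'h" and mult :: "'h \<Rightarrow> 'h \<Rightarrow> 'h" and one :: 'h
    and Delta :: "'h \<Rightarrow> ('h \<times> 'h) list" and eps :: "'h \<Rightarrow> 'k" and S :: "'h \<Rightarrow> 'h"
  assumes H: "hopf_algebra sc mult one Delta eps S"
begin

lemma vs: "vector_space sc" using H by (simp add: hopf_algebra_def)
lemma massoc: "mult (mult a b) c = mult a (mult b c)" using H by (simp add: hopf_algebra_def)
lemma mone_l[simp]: "mult one a = a" using H by (simp add: hopf_algebra_def)
lemma mone_r[simp]: "mult a one = a" using H by (simp add: hopf_algebra_def)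
lemma madd_l: "mult (a + b) c = mult a c + mult b c" using H by (simp add: hopf_algebra_def)
lemma madd_r: "mult a (b + c) = mult a b + mult a c" using H by (simp add: hopf_algebra_def)
lemma mscale_l: "mult (sc r a) b = sc r (mult a b)" using H by (simp add: hopf_algebra_def)
lemma mscale_r: "mult a (sc r b) = sc r (mult a b)" using H by (simp add: hopf_algebra_def)
lemma dadd: "teq2 sc sc (Delta (a + b)) (Delta a @ Delta b)" using H by (simp add: hopf_algebra_def)
lemma dscale: "teq2 sc sc (Delta (sc r a)) [(sc r x, y). (x, y) \<leftarrow> Delta a]" using H by (simp add: hopf_algebra_def)
lemma dcoassoc: "teq3 sc sc sc [(x1, x2, y). (x, y) \<leftarrow> Delta h, (x1, x2) \<leftarrow> Delta x]
                         [(x, y1, y2). (x, y) \<leftarrow> Delta h, (y1, y2) \<leftarrow> Delta y]" using H by (simp add: hopf_algebra_def)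
lemma eps_lin: "Vector_Spaces.linear sc (*) eps" using H by (simp add: hopf_algebra_def)
lemma counit_l: "sum_list [sc (eps x) y. (x, y) \<leftarrow> Delta h] = h" using H by (simp add: hopf_algebra_def)
lemma counit_r: "sum_list [sc (eps y) x. (x, y) \<leftarrow> Delta h] = h" using H by (simp add: hopf_algebra_def)
lemma dmult: "teq2 sc sc (Delta (mult a b))
              [(mult a1 b1, mult a2 b2). (a1, a2) \<leftarrow> Delta a, (b1, b2) \<leftarrow> Delta b]" using H by (simp add: hopf_algebra_def)
lemma d_one: "teq2 sc sc (Delta one) [(one, one)]" using H by (simp add: hopf_algebra_def)
lemma eps_mult: "eps (mult a b) = eps a * eps b" using H by (simp add: hopf_algebra_def)
lemma eps_one[simp]: "eps one = 1" using H by (simp add: hopf_algebra_def)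
lemma S_lin: "Vector_Spaces.linear sc sc S" using H by (simp add: hopf_algebra_def)
lemma antip_l: "sum_list [mult (S x) y. (x, y) \<leftarrow> Delta h] = sc (eps h) one" using H by (simp add: hopf_algebra_def)
lemma antip_r: "sum_list [mult x (S y). (x, y) \<leftarrow> Delta h] = sc (eps h) one" using H by (simp add: hopf_algebra_def)

definition lin :: "('h \<Rightarrow> 'k) \<Rightarrow> bool" where "lin f \<longleftrightarrow> Vector_Spaces.linear sc (*) f"

lemma linI2: "(\<And>x y. f (x + y) = f x + f y) \<Longrightarrow> (\<And>c x. f (sc c x) = c * f x) \<Longrightarrow> lin f"
  unfolding lin_def by (rule linI[OF vs vs_field])
lemma lin_addD: "lin f \<Longrightarrow> f (x + y) = f x + f y" unfolding lin_def by (rule lin_add)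
lemma lin_scaleD: "lin f \<Longrightarrow> f (sc c x) = c * f x" unfolding lin_def by (rule lin_scale)
lemma lin_zeroD: "lin f \<Longrightarrow> f 0 = 0" unfolding lin_def by (rule lin_zero)
lemma lin_sum_listD: "lin f \<Longrightarrow> f (sum_list (map g xs)) = sum_list (map (\<lambda>x. f (g x)) xs)"
  unfolding lin_def by (rule lin_sum_list)

lemma lin_eps: "lin eps" using eps_lin by (simp add: lin_def)
lemma lin_cl: "lin f \<Longrightarrow> lin (\<lambda>x. c * f x)"
  unfolding lin_def by (rule linI[OF vs vs_field]) (simp_all add: lin_add lin_scale algebra_simps)
lemma lin_cr: "lin f \<Longrightarrow> lin (\<lambda>x. f x * c)"
  unfolding lin_def by (rule linI[OF vs vs_field]) (simp_all add: lin_add lin_scale algebra_simps)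
lemma lin_ml: "lin f \<Longrightarrow> lin (\<lambda>x. f (mult x c))"
  unfolding lin_def by (rule linI[OF vs vs_field]) (simp_all add: lin_add lin_scale madd_l mscale_l)
lemma lin_mr: "lin f \<Longrightarrow> lin (\<lambda>x. f (mult c x))"
  unfolding lin_def by (rule linI[OF vs vs_field]) (simp_all add: lin_add lin_scale madd_r mscale_r)
lemma lin_S: "lin f \<Longrightarrow> lin (\<lambda>x. f (S x))"
  unfolding lin_def by (rule linI[OF vs vs_field]) (simp_all add: lin_add lin_scale lin_add[OF S_lin] lin_scale[OF S_lin])
lemma lin_plus: "lin f \<Longrightarrow> lin g \<Longrightarrow> lin (\<lambda>x. f x + g x)"
  unfolding lin_def by (rule linI[OF vs vs_field]) (simp_all add: lin_add lin_scale algebra_simps)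

definition sw :: "'h \<Rightarrow> ('h \<Rightarrow> 'h \<Rightarrow> 'k) \<Rightarrow> 'k" where
  "sw h F = sum_list (map (\<lambda>(a,b). F a b) (Delta h))"

definition bil :: "('h \<Rightarrow> 'h \<Rightarrow> 'k) \<Rightarrow> bool" where
  "bil F \<longleftrightarrow> (\<forall>b. lin (\<lambda>a. F a b)) \<and> (\<forall>a. lin (F a))"
definition tril :: "('h \<Rightarrow> 'h \<Rightarrow> 'h \<Rightarrow> 'k) \<Rightarrow> bool" where
  "tril F \<longleftrightarrow> (\<forall>b c. lin (\<lambda>a. F a b c)) \<and> (\<forall>a c. lin (\<lambda>b. F a b c)) \<and> (\<forall>a b. lin (F a b))"

lemma bilI: "(\<And>b. lin (\<lambda>a. F a b)) \<Longrightarrow> (\<And>a. lin (\<lambda>b. F a b)) \<Longrightarrow> bil F"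
  unfolding bil_def by auto
lemma trilI: "(\<And>b c. lin (\<lambda>a. F a b c)) \<Longrightarrow> (\<And>a c. lin (\<lambda>b. F a b c)) \<Longrightarrow> (\<And>a b. lin (\<lambda>c. F a b c)) \<Longrightarrow> tril F"
  unfolding tril_def by auto

lemma teq2_sum:
  assumes "teq2 sc sc xs ys" "bil F"
  shows "sum_list (map (\<lambda>(a,b). F a b) xs) = sum_list (map (\<lambda>(a,b). F a b) ys)"
  using assms by (intro teq2_bil[OF vs vs]) (auto simp: bil_def lin_def)

lemma teq3_sum:
  assumes "teq3 sc sc sc xs ys" "tril F"
  shows "sum_list (map (\<lambda>(a,b,c). F a b c) xs) = sum_list (map (\<lambda>(a,b,c). F a b c) ys)"
  using assms by (intro teq3_tril[OF vs vs]) (auto simp: tril_def lin_def)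

lemma sw_add: "bil F \<Longrightarrow> sw (a + b) F = sw a F + sw b F"
  unfolding sw_def using teq2_sum[OF dadd] by simp

lemma bil_l: "bil F \<Longrightarrow> lin (\<lambda>a. F a b)" by (simp add: bil_def)
lemma bil_r: "bil F \<Longrightarrow> lin (F a)" by (simp add: bil_def)

lemma sw_scale: "bil F \<Longrightarrow> sw (sc r a) F = r * sw a F"
proof -
  assume b: "bil F"
  have sF: "F (sc r x) y = r * F x y" for x y using lin_scaleD[OF bil_l[OF b, of y]] by simp
  have "sw (sc r a) F = sum_list (map (\<lambda>(x,y). F x y) [(sc r x, y). (x, y) \<leftarrow> Delta a])"
    unfolding sw_def by (rule teq2_sum[OF dscale b])
  also have "\<dots> = sum_list (map (\<lambda>(x,y). r * F x y) (Delta a))"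
    by (simp add: sF split_def comp_def)
  also have "\<dots> = r * sw a F"
    unfolding sw_def by (simp add: split_def sum_list_const_mult)
  finally show ?thesis .
qed

lemma lin_sw: "bil F \<Longrightarrow> lin (\<lambda>h. sw h F)"
  by (rule linI2) (simp_all add: sw_add sw_scale)

lemma lin_swp:
  assumes "\<And>a b. lin (\<lambda>x. F x a b)" shows "lin (\<lambda>x. sw h (F x))"
proof (rule linI2)
  show "sw h (F (x + y)) = sw h (F x) + sw h (F y)" for x y
    unfolding sw_def by (simp add: split_def lin_addD[OF assms] sum_list_addf)
  show "sw h (F (sc c x)) = c * sw h (F x)" for c x
    unfolding sw_def by (simp add: split_def lin_scaleD[OF assms] sum_list_const_mult)
qed

lemma sum_list_concat': "sum_list (concat xss) = sum_list (map sum_list xss)"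
  by (induction xss) simp_all

lemma sep_h: "(\<And>\<phi>. lin \<phi> \<Longrightarrow> \<phi> x = \<phi> y) \<Longrightarrow> x = y"
  using sep[OF vs] unfolding lin_def by blast

lemma sw_zero: "bil F \<Longrightarrow> sw 0 F = 0"
  proof -
  assume b: "bil F"
  interpret vector_space sc by (rule vs)
  show ?thesis using sw_scale[OF b, of 0 0] by simp
qed

lemma sw_sum_list: "bil F \<Longrightarrow> sw (sum_list (map G xs)) F = sum_list (map (\<lambda>x. sw (G x) F) xs)"
  by (induction xs) (simp_all add: sw_zero sw_add)

lemma sw_one: "bil F \<Longrightarrow> sw one F = F one one"
  unfolding sw_def using teq2_sum[OF d_one] by simp

lemma sw_coassoc: "tril F \<Longrightarrow> sw h (\<lambda>x y. sw x (\<lambda>x1 x2. F x1 x2 y)) = sw h (\<lambda>x y. sw y (\<lambda>y1 y2. F x y1 y2))"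
  unfolding sw_def using teq3_sum[OF dcoassoc, of F h]
  by (simp add: sum_list_concat' map_concat comp_def split_def)

lemma sw_mult: "bil F \<Longrightarrow> sw (mult a b) F = sw a (\<lambda>a1 a2. sw b (\<lambda>b1 b2. F (mult a1 b1) (mult a2 b2)))"
  unfolding sw_def using teq2_sum[OF dmult, of F a b]
  by (simp add: sum_list_concat' map_concat comp_def split_def)

lemma sw_counit_l: "lin g \<Longrightarrow> sw h (\<lambda>x y. eps x * g y) = g h"
  using lin_sum_listD[of g "\<lambda>(x,y). sc (eps x) y" "Delta h"] counit_l[of h]
  unfolding sw_def by (simp add: split_def lin_scaleD)

lemma sw_counit_r: "lin g \<Longrightarrow> sw h (\<lambda>x y. eps y * g x) = g h"
  using lin_sum_listD[of g "\<lambda>(x,y). sc (eps y) x" "Delta h"] counit_r[of h]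
  unfolding sw_def by (simp add: split_def lin_scaleD)

lemma sw_antip_l: "lin g \<Longrightarrow> sw h (\<lambda>x y. g (mult (S x) y)) = eps h * g one"
  using lin_sum_listD[of g "\<lambda>(x,y). mult (S x) y" "Delta h"] antip_l[of h]
  unfolding sw_def by (simp add: split_def lin_scaleD)

lemma sw_antip_r: "lin g \<Longrightarrow> sw h (\<lambda>x y. g (mult x (S y))) = eps h * g one"
  using lin_sum_listD[of g "\<lambda>(x,y). mult x (S y)" "Delta h"] antip_r[of h]
  unfolding sw_def by (simp add: split_def lin_scaleD)

end

context hopf begin

lemmas linR = lin_sw lin_swp lin_cl lin_cr lin_ml lin_mr lin_S lin_eps bilI trilI

lemma sw_cong: "(\<And>a b. F a b = G a b) \<Longrightarrow> sw h F = sw h G"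
  by (metis ext)

lemma sum_list_swap: fixes f :: "'a \<Rightarrow> 'b \<Rightarrow> 'c::comm_monoid_add" shows "sum_list (map (\<lambda>a. sum_list (map (\<lambda>b. f a b) ys)) xs) = sum_list (map (\<lambda>b. sum_list (map (\<lambda>a. f a b) xs)) ys)"
  by (induction xs) (simp_all add: sum_list_addf)

lemma sw_comm: "sw g (\<lambda>a b. sw h (\<lambda>c d. F a b c d)) = sw h (\<lambda>c d. sw g (\<lambda>a b. F a b c d))"
  unfolding sw_def
  by (simp add: split_def sum_list_swap[of _ "Delta h" "Delta g"])

lemma S_one: "S one = one"
proof (rule sep_h)
  fix \<phi> assume p: "lin \<phi>"
  have b: "bil (\<lambda>x y. \<phi> (mult (S x) y))" using p by (intro linR)
  have "\<phi> one = sw one (\<lambda>x y. \<phi> (mult (S x) y))" using sw_antip_l[OF p, of one] by simp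
  also have "\<dots> = \<phi> (S one)" using sw_one[OF b] by simp
  finally show "\<phi> (S one) = \<phi> one" by simp
qed

lemma eps_S: "eps (S h) = eps h"
proof -
  have "eps h = sw h (\<lambda>x y. eps (mult x (S y)))" using sw_antip_r[OF lin_eps, of h] by simp
  also have "\<dots> = sw h (\<lambda>x y. eps x * eps (S y))" by (simp add: eps_mult)
  also have "\<dots> = eps (S h)" by (rule sw_counit_l) (intro linR)
  finally show ?thesis by simp
qed

lemma bilD1: "bil G \<Longrightarrow> lin (\<lambda>z. G z c)" by (simp add: bil_def)
lemma bilD2: "bil G \<Longrightarrow> lin (\<lambda>z. G c z)" by (simp add: bil_def)

lemma dS_aux:
  assumes G: "bil G"
  shows "sw h (\<lambda>a b. sw a (\<lambda>a1 a2. sw b (\<lambda>b1 b2. G (mult a1 (S b2)) (mult a2 (S b1))))) = eps h * G one one"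
proof -
  note G1 = bilD1[OF G] and G2 = bilD2[OF G]
  have "sw h (\<lambda>a b. sw a (\<lambda>a1 a2. sw b (\<lambda>b1 b2. G (mult a1 (S b2)) (mult a2 (S b1)))))
      = sw h (\<lambda>a1 r. sw r (\<lambda>a2 b. sw b (\<lambda>b1 b2. G (mult a1 (S b2)) (mult a2 (S b1)))))"
    by (rule sw_coassoc) (intro linR G1 G2)
  also have "\<dots> = sw h (\<lambda>a1 r. sw r (\<lambda>c b2. sw c (\<lambda>a2 b1. G (mult a1 (S b2)) (mult a2 (S b1)))))"
    by (rule sw_cong, rule sw_coassoc[symmetric]) (intro linR G1 G2)
  also have "\<dots> = sw h (\<lambda>a1 r. sw r (\<lambda>c b2. eps c * G (mult a1 (S b2)) one))"
    by (rule sw_cong, rule sw_cong, rule sw_antip_r) (intro linR G1 G2)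
  also have "\<dots> = sw h (\<lambda>a1 r. G (mult a1 (S r)) one)"
    by (rule sw_cong, rule sw_counit_l) (intro linR G1 G2)
  also have "\<dots> = eps h * G one one"
    by (rule sw_antip_r) (intro linR G1 G2)
  finally show ?thesis .
qed

lemma S_delta:
  assumes F: "bil F"
  shows "sw (S h) F = sw h (\<lambda>a b. F (S b) (S a))"
proof -
  note F1 = bilD1[OF F] and F2 = bilD2[OF F]
  define K where "K x a1 a2 b1 b2 = sw (S x) (\<lambda>p q. F (mult p (mult a1 (S b2))) (mult q (mult a2 (S b1))))" for x a1 a2 b1 b2
  have Kl1: "lin (\<lambda>z. K z a1 a2 b1 b2)" for a1 a2 b1 b2 unfolding K_def by (intro linR F1 F2)
  have Kl2: "lin (\<lambda>z. K x z a2 b1 b2)" for x a2 b1 b2 unfolding K_def by (intro linR F1 F2)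
  have Kl3: "lin (\<lambda>z. K x a1 z b1 b2)" for x a1 b1 b2 unfolding K_def by (intro linR F1 F2)
  have Kl4: "lin (\<lambda>z. K x a1 a2 z b2)" for x a1 a2 b2 unfolding K_def by (intro linR F1 F2)
  have Kl5: "lin (\<lambda>z. K x a1 a2 b1 z)" for x a1 a2 b1 unfolding K_def by (intro linR F1 F2)
  have "sw (S h) F = sw h (\<lambda>x y. eps y * sw (S x) F)"
    by (rule sw_counit_r[symmetric]) (intro linR F1 F2)
  also have "\<dots> = sw h (\<lambda>x y. sw y (\<lambda>a b. sw a (\<lambda>a1 a2. sw b (\<lambda>b1 b2. K x a1 a2 b1 b2))))"
  proof (rule sw_cong)
    fix x y
    have b: "bil (\<lambda>u v. sw (S x) (\<lambda>p q. F (mult p u) (mult q v)))" by (intro linR F1 F2)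
    show "eps y * sw (S x) F = sw y (\<lambda>a b. sw a (\<lambda>a1 a2. sw b (\<lambda>b1 b2. K x a1 a2 b1 b2)))"
      using dS_aux[OF b, of y] unfolding K_def by simp
  qed
  also have "\<dots> = sw h (\<lambda>m b. sw m (\<lambda>x a. sw a (\<lambda>a1 a2. sw b (\<lambda>b1 b2. K x a1 a2 b1 b2))))"
    by (rule sw_coassoc[symmetric]) (intro linR Kl1 Kl2 Kl3 Kl4 Kl5)
  also have "\<dots> = sw h (\<lambda>m b. eps m * sw b (\<lambda>b1 b2. F (S b2) (S b1)))"
  proof (rule sw_cong)
    fix m b
    have "sw m (\<lambda>x a. sw a (\<lambda>a1 a2. sw b (\<lambda>b1 b2. K x a1 a2 b1 b2)))
        = sw m (\<lambda>x a. sw b (\<lambda>b1 b2. sw (mult (S x) a) (\<lambda>u v. F (mult u (S b2)) (mult v (S b1)))))"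
    proof (rule sw_cong)
      fix x a
      have "sw a (\<lambda>a1 a2. sw b (\<lambda>b1 b2. K x a1 a2 b1 b2)) = sw b (\<lambda>b1 b2. sw a (\<lambda>a1 a2. K x a1 a2 b1 b2))"
        by (rule sw_comm)
      also have "\<dots> = sw b (\<lambda>b1 b2. sw (S x) (\<lambda>p q. sw a (\<lambda>a1 a2. F (mult (mult p a1) (S b2)) (mult (mult q a2) (S b1)))))"
        unfolding K_def by (simp add: sw_comm[of a] massoc)
      also have "\<dots> = sw b (\<lambda>b1 b2. sw (mult (S x) a) (\<lambda>u v. F (mult u (S b2)) (mult v (S b1))))"
        by (rule sw_cong, rule sw_mult[symmetric]) (intro linR F1 F2)
      finally show "sw a (\<lambda>a1 a2. sw b (\<lambda>b1 b2. K x a1 a2 b1 b2)) = \<dots>" .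
    qed
    also have "\<dots> = sw b (\<lambda>b1 b2. sw m (\<lambda>x a. sw (mult (S x) a) (\<lambda>u v. F (mult u (S b2)) (mult v (S b1)))))"
      by (rule sw_comm)
    also have "\<dots> = sw b (\<lambda>b1 b2. eps m * sw one (\<lambda>u v. F (mult u (S b2)) (mult v (S b1))))"
      by (rule sw_cong, rule sw_antip_l) (intro linR F1 F2)
    also have "\<dots> = sw b (\<lambda>b1 b2. eps m * F (S b2) (S b1))"
      by (rule sw_cong, subst sw_one) (intro linR F1 F2, simp)
    also have "\<dots> = eps m * sw b (\<lambda>b1 b2. F (S b2) (S b1))"
      by (simp add: sw_def split_def sum_list_const_mult)
    finally show "sw m (\<lambda>x a. sw a (\<lambda>a1 a2. sw b (\<lambda>b1 b2. K x a1 a2 b1 b2))) = eps m * sw b (\<lambda>b1 b2. F (S b2) (S b1))" .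
  qed
  also have "\<dots> = sw h (\<lambda>b1 b2. F (S b2) (S b1))"
    by (rule sw_counit_l) (intro linR F1 F2)
  finally show ?thesis .
qed

lemma sw_cmult: "sw h (\<lambda>a b. c * F a b) = c * sw h F"
  by (simp add: sw_def split_def sum_list_const_mult)

lemma S_aux_C:
  assumes p: "lin \<psi>"
  shows "sw g (\<lambda>g1 g2. sw h (\<lambda>h1 h2. \<psi> (mult (S (mult g1 h1)) (mult g2 h2)))) = eps g * eps h * \<psi> one"
proof -
  have "sw g (\<lambda>g1 g2. sw h (\<lambda>h1 h2. \<psi> (mult (S (mult g1 h1)) (mult g2 h2)))) = sw (mult g h) (\<lambda>x y. \<psi> (mult (S x) y))"
    by (rule sw_mult[symmetric]) (intro linR p)
  also have "\<dots> = eps g * eps h * \<psi> one" by (simp add: sw_antip_l[OF p] eps_mult)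
  finally show ?thesis .
qed

lemma S_aux_D:
  assumes p: "lin \<psi>"
  shows "sw g (\<lambda>g1 g2. sw h (\<lambda>h1 h2. \<psi> (mult (mult g1 h1) (mult (S h2) (S g2))))) = eps g * eps h * \<psi> one"
proof -
  have "sw g (\<lambda>g1 g2. sw h (\<lambda>h1 h2. \<psi> (mult (mult g1 h1) (mult (S h2) (S g2)))))
      = sw g (\<lambda>g1 g2. sw h (\<lambda>h1 h2. (\<lambda>z. \<psi> (mult g1 (mult z (S g2)))) (mult h1 (S h2))))"
    by (simp add: massoc)
  also have "\<dots> = sw g (\<lambda>g1 g2. eps h * \<psi> (mult g1 (S g2)))"
    by (rule sw_cong, subst sw_antip_r) (intro linR p, simp)
  also have "\<dots> = eps h * (eps g * \<psi> one)"
    by (simp add: sw_cmult sw_antip_r[OF p])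
  finally show ?thesis by (simp add: algebra_simps)
qed

lemma S_mult: "S (mult g h) = mult (S h) (S g)"
proof (rule sep_h)
  fix \<phi> assume p: "lin \<phi>"
  define X where "X g1 a b h1 c d = \<phi> (mult (S (mult g1 h1)) (mult (mult a c) (mult (S d) (S b))))" for g1 a b h1 c d
  have X1: "lin (\<lambda>z. X z a b h1 c d)" for a b h1 c d unfolding X_def by (intro linR p)
  have X2: "lin (\<lambda>z. X g1 z b h1 c d)" for g1 b h1 c d unfolding X_def by (intro linR p)
  have X3: "lin (\<lambda>z. X g1 a z h1 c d)" for g1 a h1 c d unfolding X_def by (intro linR p)
  have X4: "lin (\<lambda>z. X g1 a b z c d)" for g1 a b c d unfolding X_def by (intro linR p)
  have X5: "lin (\<lambda>z. X g1 a b h1 z d)" for g1 a b h1 d unfolding X_def by (intro linR p)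
  have X6: "lin (\<lambda>z. X g1 a b h1 c z)" for g1 a b h1 c unfolding X_def by (intro linR p)
  note XL = X1 X2 X3 X4 X5 X6
  have "\<phi> (S (mult g h)) = sw g (\<lambda>g1 g2. eps g2 * \<phi> (S (mult g1 h)))"
    by (rule sw_counit_r[symmetric]) (intro linR p)
  also have "\<dots> = sw g (\<lambda>g1 g2. sw h (\<lambda>h1 h2. eps g2 * eps h2 * \<phi> (S (mult g1 h1))))"
  proof (rule sw_cong)
    fix g1 g2
    have "\<phi> (S (mult g1 h)) = sw h (\<lambda>h1 h2. eps h2 * \<phi> (S (mult g1 h1)))"
      by (rule sw_counit_r[symmetric]) (intro linR p)
    then show "eps g2 * \<phi> (S (mult g1 h)) = sw h (\<lambda>h1 h2. eps g2 * eps h2 * \<phi> (S (mult g1 h1)))"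
      by (simp add: sw_cmult mult.assoc)
  qed
  also have "\<dots> = sw g (\<lambda>g1 g2. sw h (\<lambda>h1 h2. sw g2 (\<lambda>a b. sw h2 (\<lambda>c d. X g1 a b h1 c d))))"
  proof (rule sw_cong, rule sw_cong)
    fix g1 g2 h1 h2
    have "sw g2 (\<lambda>a b. sw h2 (\<lambda>c d. X g1 a b h1 c d)) = eps g2 * eps h2 * (\<lambda>z. \<phi> (mult (S (mult g1 h1)) z)) one"
      unfolding X_def by (rule S_aux_D) (intro linR p)
    then show "eps g2 * eps h2 * \<phi> (S (mult g1 h1)) = sw g2 (\<lambda>a b. sw h2 (\<lambda>c d. X g1 a b h1 c d))" by simp
  qed
  also have "\<dots> = sw g (\<lambda>g1 g2. sw g2 (\<lambda>a b. sw h (\<lambda>h1 h2. sw h2 (\<lambda>c d. X g1 a b h1 c d))))"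
    by (rule sw_cong, rule sw_comm)
  also have "\<dots> = sw g (\<lambda>g' b. sw g' (\<lambda>g1 a. sw h (\<lambda>h1 h2. sw h2 (\<lambda>c d. X g1 a b h1 c d))))"
    by (rule sw_coassoc[symmetric]) (intro linR XL)
  also have "\<dots> = sw g (\<lambda>g' b. sw g' (\<lambda>g1 a. sw h (\<lambda>h' d. sw h' (\<lambda>h1 c. X g1 a b h1 c d))))"
    by (rule sw_cong, rule sw_cong, rule sw_coassoc[symmetric]) (intro linR XL)
  also have "\<dots> = sw g (\<lambda>g' b. sw h (\<lambda>h' d. sw g' (\<lambda>g1 a. sw h' (\<lambda>h1 c. X g1 a b h1 c d))))"
    by (rule sw_cong, rule sw_comm)
  also have "\<dots> = sw g (\<lambda>g' b. sw h (\<lambda>h' d. eps g' * eps h' * \<phi> (mult (S d) (S b))))"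
  proof (rule sw_cong, rule sw_cong)
    fix g' b h' d
    have "sw g' (\<lambda>g1 a. sw h' (\<lambda>h1 c. (\<lambda>z. \<phi> (mult z (mult (S d) (S b)))) (mult (S (mult g1 h1)) (mult a c))))
        = eps g' * eps h' * (\<lambda>z. \<phi> (mult z (mult (S d) (S b)))) one"
      by (rule S_aux_C) (intro linR p)
    then show "sw g' (\<lambda>g1 a. sw h' (\<lambda>h1 c. X g1 a b h1 c d)) = eps g' * eps h' * \<phi> (mult (S d) (S b))"
      unfolding X_def by (simp add: massoc)
  qed
  also have "\<dots> = sw g (\<lambda>g' b. eps g' * \<phi> (mult (S h) (S b)))"
  proof (rule sw_cong)
    fix g' b
    have "sw h (\<lambda>h' d. eps h' * (eps g' * \<phi> (mult (S d) (S b)))) = eps g' * \<phi> (mult (S h) (S b))"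
      by (rule sw_counit_l) (intro linR p)
    then show "sw h (\<lambda>h' d. eps g' * eps h' * \<phi> (mult (S d) (S b))) = eps g' * \<phi> (mult (S h) (S b))"
      by (simp add: algebra_simps)
  qed
  also have "\<dots> = \<phi> (mult (S h) (S g))"
    by (rule sw_counit_l) (intro linR p)
  finally show "\<phi> (S (mult g h)) = \<phi> (mult (S h) (S g))" .
qed

end

context hopf begin

lemma teq2I:
  "(\<And>f g. lin f \<Longrightarrow> lin g \<Longrightarrow> sum_list (map (\<lambda>(a,b). f a * g b) xs) = sum_list (map (\<lambda>(a,b). f a * g b) ys))
   \<Longrightarrow> teq2 sc sc xs ys"
  unfolding teq2_def lin_def by blast

lemma teq3I:
  "(\<And>f g k. lin f \<Longrightarrow> lin g \<Longrightarrow> lin k \<Longrightarrow> sum_list (map (\<lambda>(a,b,c). f a * g b * k c) xs) = sum_list (map (\<lambda>(a,b,c). f a * g b * k c) ys))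
   \<Longrightarrow> teq3 sc sc sc xs ys"
  unfolding teq3_def lin_def by blast

definition adj :: "'h \<Rightarrow> 'h \<Rightarrow> 'h" where
  "adj h x = sum_list (map (\<lambda>(a,b). mult (mult a x) (S b)) (Delta h))"

lemma adj_fun: "lin \<phi> \<Longrightarrow> \<phi> (adj h x) = sw h (\<lambda>a b. \<phi> (mult (mult a x) (S b)))"
  unfolding adj_def sw_def by (simp add: lin_sum_listD split_def)

lemma adj_module: "left_module sc mult one sc adj"
  unfolding left_module_def
proof (intro conjI allI)
  show "vector_space sc" by (rule vs)
  fix h v w
  show "adj h (v + w) = adj h v + adj h w"
  proof (rule sep_h)
    fix \<phi> assume p: "lin \<phi>"
    show "\<phi> (adj h (v + w)) = \<phi> (adj h v + adj h w)"
      by (simp add: adj_fun[OF p] lin_addD[OF p] madd_l madd_r sw_def split_def sum_list_addf)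
  qed
next
  fix h g v
  show "adj (h + g) v = adj h v + adj g v"
  proof (rule sep_h)
    fix \<phi> assume p: "lin \<phi>"
    show "\<phi> (adj (h + g) v) = \<phi> (adj h v + adj g v)"
      by (simp only: adj_fun[OF p] lin_addD[OF p], rule sw_add, intro linR p)
  qed
next
  fix r h v
  show "adj (sc r h) v = sc r (adj h v)"
  proof (rule sep_h)
    fix \<phi> assume p: "lin \<phi>"
    show "\<phi> (adj (sc r h) v) = \<phi> (sc r (adj h v))"
      by (simp only: adj_fun[OF p] lin_scaleD[OF p], rule sw_scale, intro linR p)
  qed
  show "adj h (sc r v) = sc r (adj h v)"
  proof (rule sep_h)
    fix \<phi> assume p: "lin \<phi>"
    show "\<phi> (adj h (sc r v)) = \<phi> (sc r (adj h v))"
      by (simp only: adj_fun[OF p] lin_scaleD[OF p] mscale_l mscale_r sw_cmult)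
  qed
next
  fix v
  show "adj one v = v"
  proof (rule sep_h)
    fix \<phi> assume p: "lin \<phi>"
    show "\<phi> (adj one v) = \<phi> v"
      by (simp add: adj_fun[OF p], subst sw_one) (intro linR p, simp add: S_one)
  qed
next
  fix g h v
  show "adj (mult g h) v = adj g (adj h v)"
  proof (rule sep_h)
    fix \<phi> assume p: "lin \<phi>"
    have "\<phi> (adj (mult g h) v) = sw g (\<lambda>g1 g2. sw h (\<lambda>h1 h2. \<phi> (mult (mult (mult g1 h1) v) (S (mult g2 h2)))))"
      unfolding adj_fun[OF p] by (rule sw_mult[where F="\<lambda>a b. \<phi> (mult (mult a v) (S b))", simplified]) (intro linR p)
    also have "\<dots> = sw g (\<lambda>g1 g2. sw h (\<lambda>h1 h2. (\<lambda>z. \<phi> (mult (mult g1 z) (S g2))) (mult (mult h1 v) (S h2))))"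
      by (simp add: S_mult massoc)
    also have "\<dots> = sw g (\<lambda>g1 g2. (\<lambda>z. \<phi> (mult (mult g1 z) (S g2))) (adj h v))"
    proof (rule sw_cong)
      fix g1 g2
      have l: "lin (\<lambda>z. \<phi> (mult (mult g1 z) (S g2)))" by (intro linR p)
      show "sw h (\<lambda>h1 h2. (\<lambda>z. \<phi> (mult (mult g1 z) (S g2))) (mult (mult h1 v) (S h2))) = (\<lambda>z. \<phi> (mult (mult g1 z) (S g2))) (adj h v)"
        by (rule adj_fun[OF l, symmetric])
    qed
    also have "\<dots> = \<phi> (adj g (adj h v))" by (simp only: adj_fun[OF p])
    finally show "\<phi> (adj (mult g h) v) = \<phi> (adj g (adj h v))" .
  qed
qed

lemma dscale2: "teq2 sc sc (Delta (sc r v)) [(x, sc r w). (x, w) \<leftarrow> Delta v]"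
proof (rule teq2I)
  fix f g assume f: "lin f" and g: "lin g"
  have "sum_list (map (\<lambda>(a,b). f a * g b) (Delta (sc r v))) = sw (sc r v) (\<lambda>a b. f a * g b)"
    by (simp add: sw_def)
  also have "\<dots> = r * sw v (\<lambda>a b. f a * g b)" by (rule sw_scale) (intro linR f g)
  also have "\<dots> = sum_list (map (\<lambda>(a,b). f a * g b) [(x, sc r w). (x, w) \<leftarrow> Delta v])"
    by (simp add: sw_def split_def comp_def lin_scaleD[OF g] sum_list_const_mult[symmetric] algebra_simps)
  finally show "sum_list (map (\<lambda>(a,b). f a * g b) (Delta (sc r v))) = \<dots>" .
qed

lemma delta_comodule: "left_comodule sc Delta eps sc Delta"
  unfolding left_comodule_def using vs dadd dscale2 dcoassoc counit_l by blast

lemma adj_yd: "teq2 sc sc [(mult h1 x, adj h2 y). (h1, h2) \<leftarrow> Delta h, (x, y) \<leftarrow> Delta v]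
        [(mult z h2, w). (h1, h2) \<leftarrow> Delta h, (z, w) \<leftarrow> Delta (adj h1 v)]"
proof (rule teq2I)
  fix f g assume f: "lin f" and g: "lin g"
  define Z where "Z a1 a2 v1 v2 b1 b2 h2 = f (mult (mult (mult a1 v1) (S b2)) h2) * g (mult (mult a2 v2) (S b1))"
    for a1 a2 v1 v2 b1 b2 h2
  have ZL: "lin (\<lambda>z. Z z a2 v1 v2 b1 b2 h2)" "lin (\<lambda>z. Z a1 z v1 v2 b1 b2 h2)" "lin (\<lambda>z. Z a1 a2 z v2 b1 b2 h2)"
    "lin (\<lambda>z. Z a1 a2 v1 z b1 b2 h2)" "lin (\<lambda>z. Z a1 a2 v1 v2 z b2 h2)" "lin (\<lambda>z. Z a1 a2 v1 v2 b1 z h2)"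
    "lin (\<lambda>z. Z a1 a2 v1 v2 b1 b2 z)" for a1 a2 v1 v2 b1 b2 h2
    unfolding Z_def by (intro linR f g)+
  define Fin where "Fin = sw h (\<lambda>c b. sw c (\<lambda>a1 a2. sw v (\<lambda>v1 v2. f (mult a1 v1) * g (mult (mult a2 v2) (S b)))))"
  have "sum_list (map (\<lambda>(a,b). f a * g b) [(mult h1 x, adj h2 y). (h1, h2) \<leftarrow> Delta h, (x, y) \<leftarrow> Delta v])
      = sw h (\<lambda>h1 h2. sw v (\<lambda>x y. f (mult h1 x) * g (adj h2 y)))"
    unfolding sw_def by (simp add: sum_list_concat' map_concat split_def comp_def)
  also have "\<dots> = sw h (\<lambda>h1 h2. sw v (\<lambda>x y. f (mult h1 x) * sw h2 (\<lambda>a b. g (mult (mult a y) (S b)))))"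
    by (simp only: adj_fun[OF g])
  also have "\<dots> = sw h (\<lambda>h1 h2. sw h2 (\<lambda>a b. sw v (\<lambda>x y. f (mult h1 x) * g (mult (mult a y) (S b)))))"
    by (simp only: sw_cmult[symmetric], rule sw_cong, rule sw_comm)
  also have "\<dots> = Fin"
    unfolding Fin_def by (rule sw_coassoc[symmetric]) (intro linR f g)
  finally have L: "sum_list (map (\<lambda>(a,b). f a * g b) [(mult h1 x, adj h2 y). (h1, h2) \<leftarrow> Delta h, (x, y) \<leftarrow> Delta v]) = Fin" .
  have bG: "bil (\<lambda>z w. f (mult z h2) * g w)" for h2 by (intro linR f g)
  have "sum_list (map (\<lambda>(a,b). f a * g b) [(mult z h2, w). (h1, h2) \<leftarrow> Delta h, (z, w) \<leftarrow> Delta (adj h1 v)])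
      = sw h (\<lambda>h1 h2. sw (adj h1 v) (\<lambda>z w. f (mult z h2) * g w))"
    unfolding sw_def by (simp add: sum_list_concat' map_concat split_def comp_def)
  also have "\<dots> = sw h (\<lambda>h1 h2. sw h1 (\<lambda>a b. sw a (\<lambda>a1 a2. sw v (\<lambda>v1 v2. sw b (\<lambda>b1 b2. Z a1 a2 v1 v2 b1 b2 h2)))))"
  proof (rule sw_cong)
    fix h1 h2
    have "sw (adj h1 v) (\<lambda>z w. f (mult z h2) * g w) = sw h1 (\<lambda>a b. sw (mult (mult a v) (S b)) (\<lambda>z w. f (mult z h2) * g w))"
      unfolding adj_def by (subst sw_sum_list[OF bG]) (simp add: sw_def split_def)
    also have "\<dots> = sw h1 (\<lambda>a b. sw a (\<lambda>a1 a2. sw v (\<lambda>v1 v2. sw b (\<lambda>b1 b2. Z a1 a2 v1 v2 b1 b2 h2))))"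
    proof (rule sw_cong)
      fix a b
      have "sw (mult (mult a v) (S b)) (\<lambda>z w. f (mult z h2) * g w)
          = sw (mult a v) (\<lambda>p q. sw (S b) (\<lambda>s1 s2. f (mult (mult p s1) h2) * g (mult q s2)))"
        by (rule sw_mult[where F="\<lambda>z w. f (mult z h2) * g w", simplified]) (intro linR f g)
      also have "\<dots> = sw a (\<lambda>a1 a2. sw v (\<lambda>v1 v2. sw (S b) (\<lambda>s1 s2. f (mult (mult (mult a1 v1) s1) h2) * g (mult (mult a2 v2) s2))))"
        by (rule sw_mult[where F="\<lambda>p q. sw (S b) (\<lambda>s1 s2. f (mult (mult p s1) h2) * g (mult q s2))", simplified]) (intro linR f g)
      also have "\<dots> = sw a (\<lambda>a1 a2. sw v (\<lambda>v1 v2. sw b (\<lambda>b1 b2. Z a1 a2 v1 v2 b1 b2 h2)))"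
        unfolding Z_def by (rule sw_cong, rule sw_cong, rule S_delta) (intro linR f g)
      finally show "sw (mult (mult a v) (S b)) (\<lambda>z w. f (mult z h2) * g w) = \<dots>" .
    qed
    finally show "sw (adj h1 v) (\<lambda>z w. f (mult z h2) * g w) = \<dots>" .
  qed
  also have "\<dots> = sw h (\<lambda>a r. sw r (\<lambda>b h2. sw a (\<lambda>a1 a2. sw v (\<lambda>v1 v2. sw b (\<lambda>b1 b2. Z a1 a2 v1 v2 b1 b2 h2)))))"
    by (rule sw_coassoc) (intro linR ZL)
  also have "\<dots> = sw h (\<lambda>a r. sw r (\<lambda>b h2. sw b (\<lambda>b1 b2. sw a (\<lambda>a1 a2. sw v (\<lambda>v1 v2. Z a1 a2 v1 v2 b1 b2 h2)))))"
  proof (rule sw_cong, rule sw_cong)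
    fix a r b h2
    show "sw a (\<lambda>a1 a2. sw v (\<lambda>v1 v2. sw b (\<lambda>b1 b2. Z a1 a2 v1 v2 b1 b2 h2)))
        = sw b (\<lambda>b1 b2. sw a (\<lambda>a1 a2. sw v (\<lambda>v1 v2. Z a1 a2 v1 v2 b1 b2 h2)))"
      by (simp only: sw_comm[of v b] sw_comm[of a b])
  qed
  also have "\<dots> = sw h (\<lambda>a r. sw r (\<lambda>b1 t. sw t (\<lambda>b2 h2. sw a (\<lambda>a1 a2. sw v (\<lambda>v1 v2. Z a1 a2 v1 v2 b1 b2 h2)))))"
    by (rule sw_cong, rule sw_coassoc) (intro linR ZL)
  also have "\<dots> = sw h (\<lambda>a r. sw r (\<lambda>b1 t. eps t * sw a (\<lambda>a1 a2. sw v (\<lambda>v1 v2. f (mult a1 v1) * g (mult (mult a2 v2) (S b1))))))"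
  proof (rule sw_cong, rule sw_cong)
    fix a r b1 t
    have "sw t (\<lambda>b2 h2. sw a (\<lambda>a1 a2. sw v (\<lambda>v1 v2. Z a1 a2 v1 v2 b1 b2 h2)))
        = sw a (\<lambda>a1 a2. sw v (\<lambda>v1 v2. sw t (\<lambda>b2 h2. Z a1 a2 v1 v2 b1 b2 h2)))"
      by (simp only: sw_comm[of t])
    also have "\<dots> = sw a (\<lambda>a1 a2. sw v (\<lambda>v1 v2. eps t * (f (mult a1 v1) * g (mult (mult a2 v2) (S b1)))))"
    proof (rule sw_cong, rule sw_cong)
      fix a1 a2 v1 v2
      have l: "lin (\<lambda>z. f (mult (mult a1 v1) z) * g (mult (mult a2 v2) (S b1)))" by (intro linR f g)
      show "sw t (\<lambda>b2 h2. Z a1 a2 v1 v2 b1 b2 h2) = eps t * (f (mult a1 v1) * g (mult (mult a2 v2) (S b1)))"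
        using sw_antip_l[OF l, of t] unfolding Z_def by (simp add: massoc)
    qed
    also have "\<dots> = eps t * sw a (\<lambda>a1 a2. sw v (\<lambda>v1 v2. f (mult a1 v1) * g (mult (mult a2 v2) (S b1))))"
      by (simp only: sw_cmult)
    finally show "sw t (\<lambda>b2 h2. sw a (\<lambda>a1 a2. sw v (\<lambda>v1 v2. Z a1 a2 v1 v2 b1 b2 h2))) = \<dots>" .
  qed
  also have "\<dots> = Fin"
    unfolding Fin_def by (rule sw_cong, rule sw_counit_r) (intro linR f g)
  finally show "sum_list (map (\<lambda>(a,b). f a * g b) [(mult h1 x, adj h2 y). (h1, h2) \<leftarrow> Delta h, (x, y) \<leftarrow> Delta v])
     = sum_list (map (\<lambda>(a,b). f a * g b) [(mult z h2, w). (h1, h2) \<leftarrow> Delta h, (z, w) \<leftarrow> Delta (adj h1 v)])"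
    using L by simp
qed

lemma adj_crossed: "crossed_module sc mult one Delta eps sc adj Delta"
  unfolding crossed_module_def using adj_module delta_comodule adj_yd by blast

definition coad :: "'h \<Rightarrow> ('h \<times> 'h) list" where
  "coad x = [(mult a (S c), b). (y, c) \<leftarrow> Delta x, (a, b) \<leftarrow> Delta y]"

lemma coad_sum: "sum_list (map (\<lambda>(p,q). G p q) (coad x)) = sw x (\<lambda>y c. sw y (\<lambda>a b. G (mult a (S c)) b))"
  unfolding coad_def sw_def by (simp add: sum_list_concat' map_concat split_def comp_def)

lemma lmult_module: "left_module sc mult one sc mult"
  unfolding left_module_def using vs madd_l madd_r mscale_l mscale_r massoc by auto

lemma coad_comodule: "left_comodule sc Delta eps sc coad"
  unfolding left_comodule_def
proof (intro conjI allI)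
  show "vector_space sc" by (rule vs)
  fix v w
  show "teq2 sc sc (coad (v + w)) (coad v @ coad w)"
  proof (rule teq2I)
    fix f g assume f: "lin f" and g: "lin g"
    show "sum_list (map (\<lambda>(a,b). f a * g b) (coad (v + w))) = sum_list (map (\<lambda>(a,b). f a * g b) (coad v @ coad w))"
      by (simp only: coad_sum map_append sum_list_append, rule sw_add) (intro linR f g)
  qed
next
  fix r v
  show "teq2 sc sc (coad (sc r v)) [(x, sc r w). (x, w) \<leftarrow> coad v]"
  proof (rule teq2I)
    fix f g assume f: "lin f" and g: "lin g"
    have "sum_list (map (\<lambda>(a,b). f a * g b) (coad (sc r v))) = r * sw v (\<lambda>y c. sw y (\<lambda>a b. f (mult a (S c)) * g b))"
      by (simp only: coad_sum, rule sw_scale) (intro linR f g)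
    also have "\<dots> = sum_list (map (\<lambda>(a,b). f a * g b) [(x, sc r w). (x, w) \<leftarrow> coad v])"
    proof -
      have "sum_list (map (\<lambda>(a,b). f a * g b) [(x, sc r w). (x, w) \<leftarrow> coad v]) = sum_list (map (\<lambda>(a,b). r * (f a * g b)) (coad v))"
        by (simp add: split_def comp_def lin_scaleD[OF g] algebra_simps)
      also have "\<dots> = r * sum_list (map (\<lambda>(a,b). f a * g b) (coad v))"
        by (simp add: split_def sum_list_const_mult)
      finally show ?thesis by (simp only: coad_sum)
    qed
    finally show "sum_list (map (\<lambda>(a,b). f a * g b) (coad (sc r v))) = \<dots>" .
  qed
next
  fix v
  show "teq3 sc sc sc [(h1, h2, w). (h, w) \<leftarrow> coad v, (h1, h2) \<leftarrow> Delta h]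
                      [(h, h', w'). (h, w) \<leftarrow> coad v, (h', w') \<leftarrow> coad w]"
  proof (rule teq3I)
    fix f g k assume f: "lin f" and g: "lin g" and k: "lin k"
    define \<Phi> where "\<Phi> x1 x2 x3 x4 x5 = f (mult x1 (S x5)) * g (mult x2 (S x4)) * k x3" for x1 x2 x3 x4 x5
    have PL: "lin (\<lambda>z. \<Phi> z x2 x3 x4 x5)" "lin (\<lambda>z. \<Phi> x1 z x3 x4 x5)" "lin (\<lambda>z. \<Phi> x1 x2 z x4 x5)"
      "lin (\<lambda>z. \<Phi> x1 x2 x3 z x5)" "lin (\<lambda>z. \<Phi> x1 x2 x3 x4 z)" for x1 x2 x3 x4 x5
      unfolding \<Phi>_def by (intro linR f g k)+
    define C where "C = sw v (\<lambda>x1 r1. sw r1 (\<lambda>x2 r2. sw r2 (\<lambda>x3 r3. sw r3 (\<lambda>x4 x5. \<Phi> x1 x2 x3 x4 x5))))"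
    have "sum_list (map (\<lambda>(a,b,c). f a * g b * k c) [(h1, h2, w). (h, w) \<leftarrow> coad v, (h1, h2) \<leftarrow> Delta h])
        = sum_list (map (\<lambda>(h,w). sw h (\<lambda>h1 h2. f h1 * g h2 * k w)) (coad v))"
      unfolding sw_def by (simp add: sum_list_concat' map_concat split_def comp_def)
    also have "\<dots> = sw v (\<lambda>y c. sw y (\<lambda>a b. sw (mult a (S c)) (\<lambda>h1 h2. f h1 * g h2 * k b)))"
      by (rule coad_sum)
    also have "\<dots> = sw v (\<lambda>y c. sw y (\<lambda>a b. sw a (\<lambda>a1 a2. sw c (\<lambda>c1 c2. \<Phi> a1 a2 b c1 c2))))"
    proof (rule sw_cong, rule sw_cong)
      fix y c a b
      have "sw (mult a (S c)) (\<lambda>h1 h2. f h1 * g h2 * k b) = sw a (\<lambda>a1 a2. sw (S c) (\<lambda>s1 s2. f (mult a1 s1) * g (mult a2 s2) * k b))"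
        by (rule sw_mult[where F="\<lambda>h1 h2. f h1 * g h2 * k b", simplified]) (intro linR f g k)
      also have "\<dots> = sw a (\<lambda>a1 a2. sw c (\<lambda>c1 c2. \<Phi> a1 a2 b c1 c2))"
        unfolding \<Phi>_def by (rule sw_cong, rule S_delta) (intro linR f g k)
      finally show "sw (mult a (S c)) (\<lambda>h1 h2. f h1 * g h2 * k b) = \<dots>" .
    qed
    also have "\<dots> = sw v (\<lambda>a r. sw r (\<lambda>b c. sw a (\<lambda>a1 a2. sw c (\<lambda>c1 c2. \<Phi> a1 a2 b c1 c2))))"
      by (rule sw_coassoc) (intro linR PL)
    also have "\<dots> = sw v (\<lambda>a r. sw a (\<lambda>a1 a2. sw r (\<lambda>b c. sw c (\<lambda>c1 c2. \<Phi> a1 a2 b c1 c2))))"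
      by (rule sw_cong, rule sw_comm)
    also have "\<dots> = C"
      unfolding C_def by (rule sw_coassoc) (intro linR PL)
    finally have L: "sum_list (map (\<lambda>(a,b,c). f a * g b * k c) [(h1, h2, w). (h, w) \<leftarrow> coad v, (h1, h2) \<leftarrow> Delta h]) = C" .
    have "sum_list (map (\<lambda>(a,b,c). f a * g b * k c) [(h, h', w'). (h, w) \<leftarrow> coad v, (h', w') \<leftarrow> coad w])
        = sum_list (map (\<lambda>(h,w). sum_list (map (\<lambda>(h',w'). f h * g h' * k w') (coad w))) (coad v))"
      by (simp add: sum_list_concat' map_concat split_def comp_def)
    also have "\<dots> = sw v (\<lambda>y c. sw y (\<lambda>a b. sw b (\<lambda>y' c'. sw y' (\<lambda>a' b'. \<Phi> a a' b' c' c))))"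
      unfolding \<Phi>_def by (simp only: coad_sum)
    also have "\<dots> = sw v (\<lambda>a r. sw r (\<lambda>b c. sw b (\<lambda>y' c'. sw y' (\<lambda>a' b'. \<Phi> a a' b' c' c))))"
      by (rule sw_coassoc) (intro linR PL)
    also have "\<dots> = sw v (\<lambda>a r. sw r (\<lambda>y' r2. sw r2 (\<lambda>c' c. sw y' (\<lambda>a' b'. \<Phi> a a' b' c' c))))"
      by (rule sw_cong, rule sw_coassoc) (intro linR PL)
    also have "\<dots> = sw v (\<lambda>a r. sw r (\<lambda>y' r2. sw y' (\<lambda>a' b'. sw r2 (\<lambda>c' c. \<Phi> a a' b' c' c))))"
      by (rule sw_cong, rule sw_cong, rule sw_comm)
    also have "\<dots> = C"
      unfolding C_def by (rule sw_cong, rule sw_coassoc) (intro linR PL)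
    finally show "sum_list (map (\<lambda>(a,b,c). f a * g b * k c) [(h1, h2, w). (h, w) \<leftarrow> coad v, (h1, h2) \<leftarrow> Delta h])
        = sum_list (map (\<lambda>(a,b,c). f a * g b * k c) [(h, h', w'). (h, w) \<leftarrow> coad v, (h', w') \<leftarrow> coad w])"
      using L by simp
  qed
next
  fix v
  show "sum_list [sc (eps h) w. (h, w) \<leftarrow> coad v] = v"
  proof (rule sep_h)
    fix \<phi> assume p: "lin \<phi>"
    have "\<phi> (sum_list [sc (eps h) w. (h, w) \<leftarrow> coad v]) = sum_list (map (\<lambda>(h,w). eps h * \<phi> w) (coad v))"
      by (simp add: lin_sum_listD[OF p] split_def comp_def lin_scaleD[OF p])
    also have "\<dots> = sw v (\<lambda>y c. sw y (\<lambda>a b. eps c * (eps a * \<phi> b)))"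
      by (simp only: coad_sum eps_mult eps_S mult.commute mult.left_commute)
    also have "\<dots> = sw v (\<lambda>y c. eps c * \<phi> y)"
      by (simp only: sw_cmult sw_counit_l[OF p])
    also have "\<dots> = \<phi> v" by (rule sw_counit_r[OF p])
    finally show "\<phi> (sum_list [sc (eps h) w. (h, w) \<leftarrow> coad v]) = \<phi> v" .
  qed
qed

lemma coad_yd: "teq2 sc sc [(mult h1 x, mult h2 y). (h1, h2) \<leftarrow> Delta h, (x, y) \<leftarrow> coad v]
        [(mult z h2, w). (h1, h2) \<leftarrow> Delta h, (z, w) \<leftarrow> coad (mult h1 v)]"
proof (rule teq2I)
  fix f g assume f: "lin f" and g: "lin g"
  define \<Theta> where "\<Theta> p1 p2 a b c q h2 = f (mult (mult (mult p1 a) (S (mult q c))) h2) * g (mult p2 b)" for p1 p2 a b c q h2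
  have TL: "lin (\<lambda>z. \<Theta> z p2 a b c q h2)" "lin (\<lambda>z. \<Theta> p1 z a b c q h2)" "lin (\<lambda>z. \<Theta> p1 p2 z b c q h2)"
    "lin (\<lambda>z. \<Theta> p1 p2 a z c q h2)" "lin (\<lambda>z. \<Theta> p1 p2 a b z q h2)" "lin (\<lambda>z. \<Theta> p1 p2 a b c z h2)"
    "lin (\<lambda>z. \<Theta> p1 p2 a b c q z)" for p1 p2 a b c q h2
    unfolding \<Theta>_def by (intro linR f g)+
  define \<Lambda> where "\<Lambda> p = sw v (\<lambda>y c. sw p (\<lambda>p1 p2. sw y (\<lambda>a b. f (mult (mult p1 a) (S c)) * g (mult p2 b))))" for p
  have "sum_list (map (\<lambda>(a,b). f a * g b) [(mult h1 x, mult h2 y). (h1, h2) \<leftarrow> Delta h, (x, y) \<leftarrow> coad v])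
      = sw h (\<lambda>h1 h2. sum_list (map (\<lambda>(x,y). f (mult h1 x) * g (mult h2 y)) (coad v)))"
    unfolding sw_def by (simp add: sum_list_concat' map_concat split_def comp_def)
  also have "\<dots> = sw h (\<lambda>h1 h2. sw v (\<lambda>y c. sw y (\<lambda>a b. f (mult h1 (mult a (S c))) * g (mult h2 b))))"
    by (simp only: coad_sum)
  also have "\<dots> = sw v (\<lambda>y c. sw h (\<lambda>h1 h2. sw y (\<lambda>a b. f (mult h1 (mult a (S c))) * g (mult h2 b))))"
    by (rule sw_comm)
  also have "\<dots> = \<Lambda> h" unfolding \<Lambda>_def by (simp add: massoc)
  finally have L: "sum_list (map (\<lambda>(a,b). f a * g b) [(mult h1 x, mult h2 y). (h1, h2) \<leftarrow> Delta h, (x, y) \<leftarrow> coad v]) = \<Lambda> h" .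
  have "sum_list (map (\<lambda>(a,b). f a * g b) [(mult z h2, w). (h1, h2) \<leftarrow> Delta h, (z, w) \<leftarrow> coad (mult h1 v)])
      = sw h (\<lambda>h1 h2. sum_list (map (\<lambda>(z,w). f (mult z h2) * g w) (coad (mult h1 v))))"
    unfolding sw_def by (simp add: sum_list_concat' map_concat split_def comp_def)
  also have "\<dots> = sw h (\<lambda>h1 h2. sw (mult h1 v) (\<lambda>y c. sw y (\<lambda>a b. f (mult (mult a (S c)) h2) * g b)))"
    by (simp only: coad_sum)
  also have "\<dots> = sw h (\<lambda>h1 h2. sw h1 (\<lambda>p q. sw v (\<lambda>y c. sw p (\<lambda>p1 p2. sw y (\<lambda>a b. \<Theta> p1 p2 a b c q h2)))))"
  proof (rule sw_cong)
    fix h1 h2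
    have "sw (mult h1 v) (\<lambda>y c. sw y (\<lambda>a b. f (mult (mult a (S c)) h2) * g b))
        = sw h1 (\<lambda>p q. sw v (\<lambda>y c. sw (mult p y) (\<lambda>a b. f (mult (mult a (S (mult q c))) h2) * g b)))"
      by (rule sw_mult[where F="\<lambda>y c. sw y (\<lambda>a b. f (mult (mult a (S c)) h2) * g b)", simplified]) (intro linR f g)
    also have "\<dots> = sw h1 (\<lambda>p q. sw v (\<lambda>y c. sw p (\<lambda>p1 p2. sw y (\<lambda>a b. \<Theta> p1 p2 a b c q h2))))"
      unfolding \<Theta>_def
      by (rule sw_cong, rule sw_cong, rule sw_mult[where F="\<lambda>a b. f (mult (mult a (S (mult _ _))) h2) * g b", simplified]) (intro linR f g)
    finally show "sw (mult h1 v) (\<lambda>y c. sw y (\<lambda>a b. f (mult (mult a (S c)) h2) * g b)) = \<dots>" .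
  qed
  also have "\<dots> = sw h (\<lambda>p r. sw r (\<lambda>q h2. sw v (\<lambda>y c. sw p (\<lambda>p1 p2. sw y (\<lambda>a b. \<Theta> p1 p2 a b c q h2)))))"
    by (rule sw_coassoc) (intro linR TL)
  also have "\<dots> = sw h (\<lambda>p r. eps r * \<Lambda> p)"
  proof (rule sw_cong)
    fix p r
    have "sw r (\<lambda>q h2. sw v (\<lambda>y c. sw p (\<lambda>p1 p2. sw y (\<lambda>a b. \<Theta> p1 p2 a b c q h2))))
        = sw v (\<lambda>y c. sw r (\<lambda>q h2. sw p (\<lambda>p1 p2. sw y (\<lambda>a b. \<Theta> p1 p2 a b c q h2))))"
      by (rule sw_comm)
    also have "\<dots> = sw v (\<lambda>y c. sw p (\<lambda>p1 p2. sw r (\<lambda>q h2. sw y (\<lambda>a b. \<Theta> p1 p2 a b c q h2))))"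
      by (rule sw_cong, rule sw_comm)
    also have "\<dots> = sw v (\<lambda>y c. sw p (\<lambda>p1 p2. sw y (\<lambda>a b. sw r (\<lambda>q h2. \<Theta> p1 p2 a b c q h2))))"
      by (rule sw_cong, rule sw_cong, rule sw_comm)
    also have "\<dots> = sw v (\<lambda>y c. sw p (\<lambda>p1 p2. sw y (\<lambda>a b. eps r * (f (mult (mult p1 a) (S c)) * g (mult p2 b)))))"
    proof (rule sw_cong, rule sw_cong, rule sw_cong)
      fix y c p1 p2 a b
      have l: "lin (\<lambda>z. f (mult (mult (mult p1 a) (S c)) z) * g (mult p2 b))" by (intro linR f g)
      show "sw r (\<lambda>q h2. \<Theta> p1 p2 a b c q h2) = eps r * (f (mult (mult p1 a) (S c)) * g (mult p2 b))"
        using sw_antip_l[OF l, of r] unfolding \<Theta>_def by (simp add: massoc S_mult)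
    qed
    also have "\<dots> = eps r * \<Lambda> p"
      unfolding \<Lambda>_def by (simp only: sw_cmult)
    finally show "sw r (\<lambda>q h2. sw v (\<lambda>y c. sw p (\<lambda>p1 p2. sw y (\<lambda>a b. \<Theta> p1 p2 a b c q h2)))) = eps r * \<Lambda> p" .
  qed
  also have "\<dots> = \<Lambda> h"
    unfolding \<Lambda>_def by (rule sw_counit_r) (intro linR f g)
  finally show "sum_list (map (\<lambda>(a,b). f a * g b) [(mult h1 x, mult h2 y). (h1, h2) \<leftarrow> Delta h, (x, y) \<leftarrow> coad v])
     = sum_list (map (\<lambda>(a,b). f a * g b) [(mult z h2, w). (h1, h2) \<leftarrow> Delta h, (z, w) \<leftarrow> coad (mult h1 v)])"
    using L by simp
qed

lemma coad_crossed: "crossed_module sc mult one Delta eps sc mult coad"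
  unfolding crossed_module_def using lmult_module coad_comodule coad_yd by blast

end

locale hext = hopf sc mult one Delta eps S
  for sc :: "'k::field \<Rightarrow> 'h::ab_group_add \<Rightarrow> 'h" and mult one Delta eps S +
  fixes sv :: "'k \<Rightarrow> 'v::ab_group_add \<Rightarrow> 'v" and j :: "'h \<Rightarrow> 'v" and p :: "'v \<Rightarrow> 'h"
  assumes vsv: "vector_space sv" and jl: "Vector_Spaces.linear sc sv j"
    and pl: "Vector_Spaces.linear sv sc p" and pj: "\<And>x. p (j x) = x"
begin

interpretation V: vector_space sv by (rule vsv)

definition q :: "'v \<Rightarrow> 'v" where "q v = v - j (p v)"

lemma j_add: "j (x + y) = j x + j y" using jl by (rule lin_add)
lemma j_scale: "j (sc r x) = sv r (j x)" using jl by (rule lin_scale)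
lemma j_zero[simp]: "j 0 = 0" using jl by (rule lin_zero)
lemma j_sum_list: "j (sum_list (map g xs)) = sum_list (map (\<lambda>x. j (g x)) xs)" using jl by (rule lin_sum_list)
lemma p_add: "p (x + y) = p x + p y" using pl by (rule lin_add)
lemma p_diff: "p (x - y) = p x - p y" using pl by (rule lin_diff)
lemma p_scale: "p (sv r x) = sc r (p x)" using pl by (rule lin_scale)
lemma p_zero[simp]: "p 0 = 0" using pl by (rule lin_zero)
lemma q_pj[simp]: "p (q v) = 0" by (simp add: q_def p_diff pj)
lemma q_j[simp]: "q (j x) = 0" by (simp add: q_def pj)
lemma q_q[simp]: "q (q v) = q v" by (simp add: q_def[of "q v"])
lemma q_add: "q (v + w) = q v + q w" by (simp add: q_def p_add j_add algebra_simps)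
lemma q_scale: "q (sv r v) = sv r (q v)" by (simp add: q_def p_scale j_scale V.scale_right_diff_distrib)
lemma jpq: "j (p v) + q v = v" by (simp add: q_def)

definition lv :: "('v \<Rightarrow> 'k) \<Rightarrow> bool" where "lv g \<longleftrightarrow> Vector_Spaces.linear sv (*) g"
lemma lv_add: "lv g \<Longrightarrow> g (x + y) = g x + g y" unfolding lv_def by (rule lin_add)
lemma lv_scale: "lv g \<Longrightarrow> g (sv r x) = r * g x" unfolding lv_def by (rule lin_scale)
lemma lv_zero: "lv g \<Longrightarrow> g 0 = 0" unfolding lv_def by (rule lin_zero)
lemma lv_j: "lv g \<Longrightarrow> lin (\<lambda>x. g (j x))"
  unfolding lin_def by (rule linI[OF vs vs_field]) (simp_all add: j_add j_scale lv_add lv_scale)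

lemma teq2V:
  "(\<And>f g. lin f \<Longrightarrow> lv g \<Longrightarrow> sum_list (map (\<lambda>(a,b). f a * g b) xs) = sum_list (map (\<lambda>(a,b). f a * g b) ys))
   \<Longrightarrow> teq2 sc sv xs ys"
  unfolding teq2_def lin_def lv_def by blast

lemma teq3V:
  "(\<And>f g k. lin f \<Longrightarrow> lin g \<Longrightarrow> lv k \<Longrightarrow> sum_list (map (\<lambda>(a,b,c). f a * g b * k c) xs) = sum_list (map (\<lambda>(a,b,c). f a * g b * k c) ys))
   \<Longrightarrow> teq3 sc sc sv xs ys"
  unfolding teq3_def lin_def lv_def by blast

lemma teq2D: "teq2 sc sc xs ys \<Longrightarrow> lin f \<Longrightarrow> lin g \<Longrightarrow> sum_list (map (\<lambda>(a,b). f a * g b) xs) = sum_list (map (\<lambda>(a,b). f a * g b) ys)"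
  unfolding teq2_def lin_def by blast

lemma teq3D: "teq3 sc sc sc xs ys \<Longrightarrow> lin f \<Longrightarrow> lin g \<Longrightarrow> lin k \<Longrightarrow>
   sum_list (map (\<lambda>(a,b,c). f a * g b * k c) xs) = sum_list (map (\<lambda>(a,b,c). f a * g b * k c) ys)"
  unfolding teq3_def lin_def by blast

definition extA :: "('h \<Rightarrow> 'h \<Rightarrow> 'h) \<Rightarrow> 'h \<Rightarrow> 'v \<Rightarrow> 'v" where
  "extA act h v = j (act h (p v)) + sv (eps h) (q v)"
definition extC :: "('h \<Rightarrow> ('h \<times> 'h) list) \<Rightarrow> 'v \<Rightarrow> ('h \<times> 'v) list" where
  "extC co v = map (\<lambda>(x,y). (x, j y)) (co (p v)) @ [(one, q v)]"

lemma extC_sum: "sum_list (map (\<lambda>(a,b). F a b) (extC co v)) = sum_list (map (\<lambda>(x,y). F x (j y)) (co (p v))) + F one (q v)"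
  unfolding extC_def by (simp add: split_def comp_def)

lemma sw_plus: "sw h (\<lambda>a b. F a b + G a b) = sw h F + sw h G"
  by (simp add: sw_def split_def sum_list_addf)

lemma ext_crossed:
  assumes X: "crossed_module sc mult one Delta eps sc act co"
  shows "crossed_module sc mult one Delta eps sv (extA act) (extC co)"
proof -
  interpret Hs: vector_space sc by (rule vs)
  have A1: "\<And>h v w. act h (v + w) = act h v + act h w"
    and A2: "\<And>h g v. act (h + g) v = act h v + act g v"
    and A3: "\<And>r h v. act (sc r h) v = sc r (act h v)"
    and A3': "\<And>r h v. act h (sc r v) = sc r (act h v)"
    and A4: "\<And>v. act one v = v"
    and A5: "\<And>g h v. act (mult g h) v = act g (act h v)"
    using X unfolding crossed_module_def left_module_def by blast+
  have C1: "\<And>v w. teq2 sc sc (co (v + w)) (co v @ co w)"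
    and C2: "\<And>r v. teq2 sc sc (co (sc r v)) [(x, sc r w). (x, w) \<leftarrow> co v]"
    and C3: "\<And>v. teq3 sc sc sc [(h1, h2, w). (h, w) \<leftarrow> co v, (h1, h2) \<leftarrow> Delta h]
                         [(h, h', w'). (h, w) \<leftarrow> co v, (h', w') \<leftarrow> co w]"
    and C4: "\<And>v. sum_list [sc (eps h) w. (h, w) \<leftarrow> co v] = v"
    using X unfolding crossed_module_def left_comodule_def by blast+
  have Y: "\<And>h v. teq2 sc sc
        [(mult h1 x, act h2 y). (h1, h2) \<leftarrow> Delta h, (x, y) \<leftarrow> co v]
        [(mult z h2, w). (h1, h2) \<leftarrow> Delta h, (z, w) \<leftarrow> co (act h1 v)]"
    using X unfolding crossed_module_def by blast
  have act0: "act h 0 = 0" for h using A1[of h 0 0] by simp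
  have co0: "sum_list (map (\<lambda>(x,y). f x * g y) (co 0)) = 0" if f: "lin f" and g: "lin g" for f g
  proof -
    have "sum_list (map (\<lambda>(x,y). f x * g y) (co (0 + 0))) = sum_list (map (\<lambda>(x,y). f x * g y) (co 0 @ co 0))"
      by (rule teq2D[OF C1 f g])
    then have "sum_list (map (\<lambda>(x,y). f x * g y) (co 0)) = sum_list (map (\<lambda>(x,y). f x * g y) (co 0)) + sum_list (map (\<lambda>(x,y). f x * g y) (co 0))"
      by (simp only: add_0 map_append sum_list_append)
    then show ?thesis by (simp only: add_cancel_right_right)
  qed
  have eps_add: "eps (x + y) = eps x + eps y" for x y using lin_eps by (rule lin_addD)
  have eps_sc: "eps (sc r x) = r * eps x" for r x using lin_eps by (rule lin_scaleD)
  have pA: "p (extA act h v) = act h (p v)" for h v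
    by (simp add: extA_def p_add p_scale pj)
  have qA: "q (extA act h v) = sv (eps h) (q v)" for h v
    by (simp add: extA_def q_add q_scale)
  have A_j: "extA act h (j y) = j (act h y)" for h y by (simp add: extA_def pj)
  have A_q: "extA act h (q v) = sv (eps h) (q v)" for h v by (simp add: extA_def act0)
  have M: "left_module sc mult one sv (extA act)"
    unfolding left_module_def
  proof (intro conjI allI)
    show "vector_space sv" by (rule vsv)
    fix h v w show "extA act h (v + w) = extA act h v + extA act h w"
      by (simp add: extA_def p_add q_add A1 j_add V.scale_right_distrib algebra_simps)
  next
    fix h g v show "extA act (h + g) v = extA act h v + extA act g v"
      by (simp add: extA_def A2 j_add eps_add V.scale_left_distrib algebra_simps)
  next
    fix r h v
    show "extA act (sc r h) v = sv r (extA act h v)"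
      by (simp add: extA_def A3 j_scale eps_sc V.scale_right_distrib)
    show "extA act h (sv r v) = sv r (extA act h v)"
      by (simp add: extA_def p_scale A3' j_scale q_scale V.scale_right_distrib V.scale_left_commute)
  next
    fix v show "extA act one v = v" by (simp add: extA_def A4 jpq)
  next
    fix g h v show "extA act (mult g h) v = extA act g (extA act h v)"
      by (simp add: extA_def[of act g] pA qA, simp add: extA_def A5 eps_mult)
  qed
  have CM: "left_comodule sc Delta eps sv (extC co)"
    unfolding left_comodule_def
  proof (intro conjI allI)
    show "vector_space sv" by (rule vsv)
    fix v w
    show "teq2 sc sv (extC co (v + w)) (extC co v @ extC co w)"
    proof (rule teq2V)
      fix f g assume f: "lin f" and g: "lv g"
      have gj: "lin (\<lambda>x. g (j x))" by (rule lv_j[OF g])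
      show "sum_list (map (\<lambda>(a,b). f a * g b) (extC co (v + w))) = sum_list (map (\<lambda>(a,b). f a * g b) (extC co v @ extC co w))"
        unfolding map_append sum_list_append extC_sum using teq2D[OF C1[of "p v" "p w"] f gj]
        by (simp add: p_add q_add lv_add[OF g] algebra_simps)
    qed
  next
    fix r v
    show "teq2 sc sv (extC co (sv r v)) [(x, sv r w). (x, w) \<leftarrow> extC co v]"
    proof (rule teq2V)
      fix f g assume f: "lin f" and g: "lv g"
      have gj: "lin (\<lambda>x. g (j x))" by (rule lv_j[OF g])
      have e1: "sum_list (map (\<lambda>(a,b). f a * g b) [(x, sv r w). (x, w) \<leftarrow> extC co v])
          = sum_list (map (\<lambda>(x,y). f x * g (j (sc r y))) (co (p v))) + f one * g (sv r (q v))"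
        unfolding extC_def by (simp add: split_def comp_def j_scale)
      show "sum_list (map (\<lambda>(a,b). f a * g b) (extC co (sv r v))) = sum_list (map (\<lambda>(a,b). f a * g b) [(x, sv r w). (x, w) \<leftarrow> extC co v])"
        unfolding e1 extC_sum using teq2D[OF C2[of r "p v"] f gj]
        by (simp add: p_scale q_scale split_def comp_def)
    qed
  next
    fix v
    show "teq3 sc sc sv [(h1, h2, w). (h, w) \<leftarrow> extC co v, (h1, h2) \<leftarrow> Delta h]
                         [(h, h', w'). (h, w) \<leftarrow> extC co v, (h', w') \<leftarrow> extC co w]"
    proof (rule teq3V)
      fix f g k assume f: "lin f" and g: "lin g" and k: "lv k"
      have kj: "lin (\<lambda>x. k (j x))" by (rule lv_j[OF k])
      have c3: "sum_list (map (\<lambda>(x,y). sw x (\<lambda>h1 h2. f h1 * g h2 * k (j y))) (co (p v)))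
          = sum_list (map (\<lambda>(x,y). f x * sum_list (map (\<lambda>(x',y'). g x' * k (j y')) (co y))) (co (p v)))"
        using teq3D[OF C3[of "p v"] f g kj]
        by (simp add: sw_def sum_list_concat' map_concat split_def comp_def sum_list_const_mult mult.assoc)
      have l: "sum_list (map (\<lambda>(a,b,c). f a * g b * k c) [(h1, h2, w). (h, w) \<leftarrow> extC co v, (h1, h2) \<leftarrow> Delta h])
          = sum_list (map (\<lambda>(x,y). sw x (\<lambda>h1 h2. f h1 * g h2 * k (j y))) (co (p v))) + sw one (\<lambda>h1 h2. f h1 * g h2 * k (q v))"
        unfolding extC_def sw_def by (simp add: sum_list_concat' map_concat split_def comp_def)
      have r: "sum_list (map (\<lambda>(a,b,c). f a * g b * k c) [(h, h', w'). (h, w) \<leftarrow> extC co v, (h', w') \<leftarrow> extC co w])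
          = sum_list (map (\<lambda>(x,y). f x * sum_list (map (\<lambda>(x',y'). g x' * k (j y')) (co y))) (co (p v)))
            + f one * (sum_list (map (\<lambda>(x',y'). g x' * k (j y')) (co 0)) + g one * k (q v))"
        unfolding extC_def
        by (simp add: sum_list_concat' map_concat split_def comp_def lv_zero[OF k] sum_list_const_mult algebra_simps pj)
      have s1: "sw one (\<lambda>h1 h2. f h1 * g h2 * k (q v)) = f one * (g one * k (q v))"
        by (subst sw_one) (intro linR f g, simp add: mult.assoc)
      show "sum_list (map (\<lambda>(a,b,c). f a * g b * k c) [(h1, h2, w). (h, w) \<leftarrow> extC co v, (h1, h2) \<leftarrow> Delta h])
          = sum_list (map (\<lambda>(a,b,c). f a * g b * k c) [(h, h', w'). (h, w) \<leftarrow> extC co v, (h', w') \<leftarrow> extC co w])"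
        unfolding l r s1 c3 co0[OF g kj] by simp
    qed
  next
    fix v
    show "sum_list [sv (eps h) w. (h, w) \<leftarrow> extC co v] = v"
    proof -
      have "sum_list [sv (eps h) w. (h, w) \<leftarrow> extC co v] = j (sum_list [sc (eps h) w. (h, w) \<leftarrow> co (p v)]) + q v"
        unfolding extC_def by (simp add: split_def comp_def j_sum_list j_scale)
      also have "\<dots> = v" by (simp only: C4 jpq)
      finally show ?thesis .
    qed
  qed
  have YV: "teq2 sc sv [(mult h1 x, extA act h2 y). (h1, h2) \<leftarrow> Delta h, (x, y) \<leftarrow> extC co v]
        [(mult z h2, w). (h1, h2) \<leftarrow> Delta h, (z, w) \<leftarrow> extC co (extA act h1 v)]" for h v
  proof (rule teq2V)
    fix f g assume f: "lin f" and g: "lv g"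
    have gj: "lin (\<lambda>x. g (j x))" by (rule lv_j[OF g])
    have y: "sw h (\<lambda>h1 h2. sum_list (map (\<lambda>(x,y). f (mult h1 x) * g (j (act h2 y))) (co (p v))))
       = sw h (\<lambda>h1 h2. sum_list (map (\<lambda>(z,w). f (mult z h2) * g (j w)) (co (act h1 (p v)))))"
      using teq2D[OF Y[where h=h and v="p v"] f gj]
      by (simp add: sw_def sum_list_concat' map_concat split_def comp_def)
    have l: "sum_list (map (\<lambda>(a,b). f a * g b) [(mult h1 x, extA act h2 y). (h1, h2) \<leftarrow> Delta h, (x, y) \<leftarrow> extC co v])
       = sw h (\<lambda>h1 h2. sum_list (map (\<lambda>(x,y). f (mult h1 x) * g (j (act h2 y))) (co (p v))))
         + sw h (\<lambda>h1 h2. eps h2 * (f h1 * g (q v)))"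
      unfolding sw_plus[symmetric] unfolding extC_def sw_def
      by (simp add: sum_list_concat' map_concat split_def comp_def A_j A_q lv_scale[OF g] algebra_simps)
    have r: "sum_list (map (\<lambda>(a,b). f a * g b) [(mult z h2, w). (h1, h2) \<leftarrow> Delta h, (z, w) \<leftarrow> extC co (extA act h1 v)])
       = sw h (\<lambda>h1 h2. sum_list (map (\<lambda>(z,w). f (mult z h2) * g (j w)) (co (act h1 (p v)))))
         + sw h (\<lambda>h1 h2. eps h1 * (f h2 * g (q v)))"
      unfolding sw_plus[symmetric] unfolding extC_def sw_def
      by (simp add: sum_list_concat' map_concat split_def comp_def pA qA lv_scale[OF g] algebra_simps)
    have c1: "sw h (\<lambda>h1 h2. eps h2 * (f h1 * g (q v))) = f h * g (q v)"
      by (rule sw_counit_r) (intro linR f)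
    have c2: "sw h (\<lambda>h1 h2. eps h1 * (f h2 * g (q v))) = f h * g (q v)"
      by (rule sw_counit_l) (intro linR f)
    show "sum_list (map (\<lambda>(a,b). f a * g b) [(mult h1 x, extA act h2 y). (h1, h2) \<leftarrow> Delta h, (x, y) \<leftarrow> extC co v])
       = sum_list (map (\<lambda>(a,b). f a * g b) [(mult z h2, w). (h1, h2) \<leftarrow> Delta h, (z, w) \<leftarrow> extC co (extA act h1 v)])"
      unfolding l r c1 c2 y ..
  qed
  show ?thesis unfolding crossed_module_def using M CM YV by blast
qed

end

context hopf begin

lemma R_unit:
  assumes Q: "quasitriangular sc mult one Delta eps S R" and f: "lin f"
  shows "sum_list (map (\<lambda>(a,b). eps a * f b) R) = f one"
proof -
  obtain Rinv where inv: "teq2 sc sc [(mult a c, mult b d). (a, b) \<leftarrow> R, (c, d) \<leftarrow> Rinv] [(one, one)]"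
    using Q unfolding quasitriangular_def by blast
  have D: "teq3 sc sc sc [(x1, x2, y). (x, y) \<leftarrow> R, (x1, x2) \<leftarrow> Delta x]
                   [(a, c, mult b d). (a, b) \<leftarrow> R, (c, d) \<leftarrow> R]"
    using Q unfolding quasitriangular_def by blast
  define u where "u = sum_list (map (\<lambda>(a,b). sc (eps a) b) R)"
  define u' where "u' = sum_list (map (\<lambda>(a,b). sc (eps a) b) Rinv)"
  have fu: "g u = sum_list (map (\<lambda>(a,b). eps a * g b) R)" if g: "lin g" for g
    unfolding u_def by (simp add: lin_sum_listD[OF g] split_def lin_scaleD[OF g])
  have fuv: "g (mult (sum_list (map (\<lambda>(a,b). sc (eps a) b) X)) (sum_list (map (\<lambda>(a,b). sc (eps a) b) Y)))
      = sum_list (map (\<lambda>(a,b). sum_list (map (\<lambda>(c,d). eps a * eps c * g (mult b d)) Y)) X)" if g: "lin g" for g X Y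
  proof -
    have l1: "lin (\<lambda>z. g (mult z (sum_list (map (\<lambda>(a,b). sc (eps a) b) Y))))" by (intro linR g)
    have l2: "lin (\<lambda>z. g (mult b z))" for b by (intro linR g)
    show ?thesis
      unfolding lin_sum_listD[OF l1]
      by (simp add: lin_sum_listD[OF l2] split_def mscale_l mscale_r lin_scaleD[OF g]
          sum_list_const_mult mult.assoc)
  qed
  have uu: "mult u u = u"
  proof (rule sep_h)
    fix g assume g: "lin g"
    have "sum_list (map (\<lambda>(a,b,c). eps a * eps b * g c) [(x1, x2, y). (x, y) \<leftarrow> R, (x1, x2) \<leftarrow> Delta x])
        = sum_list (map (\<lambda>(a,b,c). eps a * eps b * g c) [(a, c, mult b d). (a, b) \<leftarrow> R, (c, d) \<leftarrow> R])"
      using D g unfolding teq3_def lin_def using lin_eps[unfolded lin_def] by blast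
    moreover have "sum_list (map (\<lambda>(a,b,c). eps a * eps b * g c) [(x1, x2, y). (x, y) \<leftarrow> R, (x1, x2) \<leftarrow> Delta x])
        = sum_list (map (\<lambda>(x,y). sw x (\<lambda>x1 x2. eps x1 * eps x2) * g y) R)"
      unfolding sw_def by (simp add: sum_list_concat' map_concat split_def comp_def sum_list_const_mult[symmetric] mult.commute mult.left_commute)
    moreover have "sw x (\<lambda>x1 x2. eps x1 * eps x2) = eps x" for x by (rule sw_counit_l[OF lin_eps])
    ultimately have "sum_list (map (\<lambda>(x,y). eps x * g y) R)
        = sum_list (map (\<lambda>(a,b). sum_list (map (\<lambda>(c,d). eps a * eps c * g (mult b d)) R)) R)"
      by (simp add: sum_list_concat' map_concat split_def comp_def)
    then show "g (mult u u) = g u" unfolding fu[OF g] unfolding u_def fuv[OF g] by simp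
  qed
  have uu': "mult u u' = one"
  proof (rule sep_h)
    fix g assume g: "lin g"
    have "sum_list (map (\<lambda>(a,b). eps a * g b) [(mult a c, mult b d). (a, b) \<leftarrow> R, (c, d) \<leftarrow> Rinv])
        = sum_list (map (\<lambda>(a,b). eps a * g b) [(one, one)])"
      using inv g unfolding teq2_def lin_def using lin_eps[unfolded lin_def] by blast
    then show "g (mult u u') = g one"
      unfolding u_def u'_def fuv[OF g]
      by (simp add: sum_list_concat' map_concat split_def comp_def eps_mult)
  qed
  have "u = one"
  proof -
    have "u = mult u (mult u u')" by (simp add: uu')
    also have "\<dots> = mult u u'" by (simp add: massoc[symmetric] uu)
    finally show ?thesis using uu' by simp
  qed
  then show ?thesis using fu[OF f] by simp
qed

lemma Rd_unit:
  assumes Q: "dual_quasitriangular sc mult one Delta eps S R"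
  shows "R one h = eps h"
proof -
  have R1: "\<And>g. lin (\<lambda>h. R h g)" and R2: "\<And>h. lin (R h)"
    using Q unfolding dual_quasitriangular_def lin_def by blast+
  obtain Rinv where RI: "(\<forall>g. Vector_Spaces.linear sc (*) (\<lambda>h. Rinv h g)) \<and> (\<forall>h. Vector_Spaces.linear sc (*) (Rinv h))
        \<and> (\<forall>h g. sum_list [R h1 g1 * Rinv h2 g2. (h1, h2) \<leftarrow> Delta h, (g1, g2) \<leftarrow> Delta g]
                  = eps h * eps g
               \<and> sum_list [Rinv h1 g1 * R h2 g2. (h1, h2) \<leftarrow> Delta h, (g1, g2) \<leftarrow> Delta g]
                  = eps h * eps g)"
    using Q unfolding dual_quasitriangular_def by blast
  have I1: "\<And>g. lin (\<lambda>h. Rinv h g)" and I2: "\<And>h. lin (Rinv h)"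
    and inv: "\<And>h g. sum_list [R h1 g1 * Rinv h2 g2. (h1, h2) \<leftarrow> Delta h, (g1, g2) \<leftarrow> Delta g] = eps h * eps g"
    using RI unfolding lin_def by blast+
  have Rm: "\<And>h g f. R (mult h g) f = sum_list [R h f1 * R g f2. (f1, f2) \<leftarrow> Delta f]"
    using Q unfolding dual_quasitriangular_def by blast
  have a: "R one f = sw f (\<lambda>f1 f2. R one f1 * R one f2)" for f
    using Rm[of one one f] by (simp add: sw_def split_def comp_def)
  have b: "sw g (\<lambda>g1 g2. R one g1 * Rinv one g2) = eps g" for g
  proof -
    have "eps g = sw one (\<lambda>h1 h2. sw g (\<lambda>g1 g2. R h1 g1 * Rinv h2 g2))"
      using inv[where h=one and g=g] by (simp add: sw_def sum_list_concat' map_concat split_def comp_def)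
    also have "\<dots> = sw g (\<lambda>g1 g2. R one g1 * Rinv one g2)"
      by (rule sw_one) (intro linR R1 R2 I1 I2)
    finally show ?thesis by simp
  qed
  have "R one h = sw h (\<lambda>a b. eps b * R one a)"
    by (rule sw_counit_r[symmetric]) (intro R2)
  also have "\<dots> = sw h (\<lambda>a b. sw b (\<lambda>b1 b2. R one a * R one b1 * Rinv one b2))"
  proof (rule sw_cong)
    fix a b
    have "eps b * R one a = R one a * sw b (\<lambda>b1 b2. R one b1 * Rinv one b2)" by (simp add: b)
    also have "\<dots> = sw b (\<lambda>b1 b2. R one a * (R one b1 * Rinv one b2))" by (rule sw_cmult[symmetric])
    finally show "eps b * R one a = sw b (\<lambda>b1 b2. R one a * R one b1 * Rinv one b2)" by (simp add: mult.assoc)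
  qed
  also have "\<dots> = sw h (\<lambda>a' b2. sw a' (\<lambda>a b1. R one a * R one b1 * Rinv one b2))"
    by (rule sw_coassoc[symmetric]) (intro linR R1 R2 I1 I2)
  also have "\<dots> = sw h (\<lambda>a' b2. R one a' * Rinv one b2)"
  proof (rule sw_cong)
    fix a' b2
    have "sw a' (\<lambda>a b1. R one a * R one b1 * Rinv one b2) = sw a' (\<lambda>a b1. Rinv one b2 * (R one a * R one b1))"
      by (simp only: mult_ac)
    also have "\<dots> = Rinv one b2 * sw a' (\<lambda>a b1. R one a * R one b1)" by (rule sw_cmult)
    also have "\<dots> = Rinv one b2 * R one a'" by (simp only: a[of a', symmetric])
    finally show "sw a' (\<lambda>a b1. R one a * R one b1 * Rinv one b2) = R one a' * Rinv one b2"
      by (simp only: mult.commute)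
  qed
  also have "\<dots> = eps h" by (rule b)
  finally show ?thesis .
qed

end

theorem proposition4p1:
  fixes sc :: "'k::field \<Rightarrow> 'h::ab_group_add \<Rightarrow> 'h"
    and mult :: "'h \<Rightarrow> 'h \<Rightarrow> 'h" and one :: 'h
    and Delta :: "'h \<Rightarrow> ('h \<times> 'h) list" and eps :: "'h \<Rightarrow> 'k" and S :: "'h \<Rightarrow> 'h"
    and sv :: "'k \<Rightarrow> 'v::ab_group_add \<Rightarrow> 'v"
    and R :: "('h \<times> 'h) list" and Rd :: "'h \<Rightarrow> 'h \<Rightarrow> 'k"
  assumes "hopf_nontrivial sc one"
    and "vector_space sv"
    and "\<exists>j. Vector_Spaces.linear sc sv j \<and> inj j"
  shows "(quasitriangular sc mult one Delta eps S R \<longrightarrow>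
            \<not> functor_i_iso sc mult one Delta eps R sv)
       \<and> (dual_quasitriangular sc mult one Delta eps S Rd \<longrightarrow>
            \<not> functor_ii_iso sc mult one Delta eps Rd sv)"
proof -
  obtain j where jl: "Vector_Spaces.linear sc sv j" and ji: "inj j" using assms(3) by blast
  have vsp: "vector_space_pair sc sv"
    unfolding vector_space_pair_def using lin_vs1[OF jl] assms(2) by blast
  obtain p where pl: "Vector_Spaces.linear sv sc p" and pjo: "p \<circ> j = id"
    using vector_space_pair.linear_injective_left_inverse[OF vsp jl ji] by blast
  have pj: "p (j x) = x" for x using pjo by (metis comp_apply id_apply)
  obtain h0 where h0: "\<And>c. h0 \<noteq> sc c one" using assms(1) unfolding hopf_nontrivial_def by blast
  show ?thesis
  proof (intro conjI impI)
    assume Q: "quasitriangular sc mult one Delta eps S R"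
    then have H: "hopf_algebra sc mult one Delta eps S" by (simp add: quasitriangular_def)
    interpret hext sc mult one Delta eps S sv j p
      using H assms(2) jl pl pj by (simp add: hext_def hext_axioms_def hopf_def)
    interpret Hs: vector_space sc by (rule vs)
    show "\<not> functor_i_iso sc mult one Delta eps R sv"
    proof
      assume Fi: "functor_i_iso sc mult one Delta eps R sv"
      have cm: "crossed_module sc mult one Delta eps sv (extA adj) (extC Delta)"
        by (rule ext_crossed[OF adj_crossed])
      from Fi cm obtain act where eq: "crossed_obj_eq sc sv (act, R_coaction R act) (extA adj, extC Delta)"
        unfolding functor_i_iso_def id_on_morphisms_functor_iso_def by fastforce
      then have actd: "act = extA adj" and teq: "\<And>v. teq2 sc sv (R_coaction R act v) (extC Delta v)"
        unfolding crossed_obj_eq_def by auto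
      have key: "f h0 = f (sc (eps h0) one)" if f: "lin f" for f
      proof -
        have g: "Vector_Spaces.linear sv (*) (\<lambda>v. eps (p v))"
          by (rule linI[OF vsv vs_field]) (simp_all add: p_add p_scale lin_addD[OF lin_eps] lin_scaleD[OF lin_eps])
        have e: "sum_list (map (\<lambda>(a,b). f a * eps (p b)) (R_coaction R act (j h0)))
            = sum_list (map (\<lambda>(a,b). f a * eps (p b)) (extC Delta (j h0)))"
          using teq[of "j h0"] f g unfolding teq2_def lin_def by blast
        have ea: "eps (adj a h0) = eps a * eps h0" for a
        proof -
          have "eps (adj a h0) = sw a (\<lambda>x y. eps y * (eps x * eps h0))"
            by (simp add: adj_fun[OF lin_eps] eps_mult eps_S mult_ac)
          also have "\<dots> = eps a * eps h0" by (rule sw_counit_r) (intro linR)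
          finally show ?thesis .
        qed
        have "sum_list (map (\<lambda>(a,b). f a * eps (p b)) (R_coaction R act (j h0)))
            = sum_list (map (\<lambda>(a,b). eps h0 * (eps a * f b)) R)"
          unfolding R_coaction_def actd
          by (simp add: split_def comp_def extA_def pj ea p_add p_scale mult_ac)
        also have "\<dots> = eps h0 * f one"
          by (simp add: split_def sum_list_const_mult R_unit[OF Q f, unfolded split_def])
        also have "\<dots> = f (sc (eps h0) one)" by (simp add: lin_scaleD[OF f])
        finally have l: "sum_list (map (\<lambda>(a,b). f a * eps (p b)) (R_coaction R act (j h0))) = f (sc (eps h0) one)" .
        have "sum_list (map (\<lambda>(a,b). f a * eps (p b)) (extC Delta (j h0))) = sw h0 (\<lambda>x y. eps y * f x)"
          unfolding extC_sum by (simp add: pj lin_zeroD[OF lin_eps] sw_def split_def mult_ac)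
        also have "\<dots> = f h0" by (rule sw_counit_r[OF f])
        finally show ?thesis using e l by simp
      qed
      have "h0 = sc (eps h0) one" by (rule sep_h) (rule key)
      with h0 show False by blast
    qed
  next
    assume Q: "dual_quasitriangular sc mult one Delta eps S Rd"
    then have H: "hopf_algebra sc mult one Delta eps S" by (simp add: dual_quasitriangular_def)
    interpret hext sc mult one Delta eps S sv j p
      using H assms(2) jl pl pj by (simp add: hext_def hext_axioms_def hopf_def)
    interpret Vv: vector_space sv by (rule vsv)
    have R1: "\<And>g. lin (\<lambda>h. Rd h g)" and R2: "\<And>h. lin (Rd h)"
      using Q unfolding dual_quasitriangular_def lin_def by blast+
    show "\<not> functor_ii_iso sc mult one Delta eps Rd sv"
    proof
      assume Fi: "functor_ii_iso sc mult one Delta eps Rd sv"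
      have cm: "crossed_module sc mult one Delta eps sv (extA mult) (extC coad)"
        by (rule ext_crossed[OF coad_crossed])
      from Fi cm obtain coact where eq: "crossed_obj_eq sc sv (R_action sv Rd coact, coact) (extA mult, extC coad)"
        unfolding functor_ii_iso_def id_on_morphisms_functor_iso_def by fastforce
      then have actd: "R_action sv Rd coact = extA mult" and teq: "\<And>v. teq2 sc sv (coact v) (extC coad v)"
        unfolding crossed_obj_eq_def by auto
      have key: "g (j h0) = g (j (sc (eps h0) one))" if g: "Vector_Spaces.linear sv (*) g" for g
      proof -
        have gv: "lv g" using g by (simp add: lv_def)
        have gj: "lin (\<lambda>x. g (j x))" by (rule lv_j[OF gv])
        have "g (j h0) = g (extA mult h0 (j one))" by (simp add: extA_def pj lv_zero[OF gv])
        also have "\<dots> = g (R_action sv Rd coact h0 (j one))" by (simp add: actd)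
        also have "\<dots> = sum_list (map (\<lambda>(a,b). Rd a h0 * g b) (coact (j one)))"
          unfolding R_action_def using g by (simp add: lin_sum_list lin_scale split_def comp_def)
        also have "\<dots> = sum_list (map (\<lambda>(a,b). Rd a h0 * g b) (extC coad (j one)))"
          using teq[of "j one"] g R1[of h0] unfolding teq2_def lin_def by blast
        also have "\<dots> = sum_list (map (\<lambda>(a,b). Rd a h0 * g (j b)) (coad one))"
          unfolding extC_sum by (simp add: pj lv_zero[OF gv] split_def)
        also have "\<dots> = sw one (\<lambda>y c. sw y (\<lambda>a b. Rd (mult a (S c)) h0 * g (j b)))"
          by (rule coad_sum)
        also have "\<dots> = sw one (\<lambda>a b. Rd (mult a (S one)) h0 * g (j b))"
          by (rule sw_one) (intro linR R1 gj)
        also have "\<dots> = Rd one h0 * g (j one)"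
          by (subst sw_one) (intro linR R1 gj, simp add: S_one)
        also have "\<dots> = g (j (sc (eps h0) one))"
          by (simp add: Rd_unit[OF Q] j_scale lv_scale[OF gv])
        finally show ?thesis .
      qed
      have "j h0 = j (sc (eps h0) one)" by (rule sep[OF vsv]) (rule key)
      then have "h0 = sc (eps h0) one" using pj by metis
      with h0 show False by blast
    qed
  qed
qed

end
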